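(* Let $P$ be an $\omega$-polygraph and $u,v_1,v_2$ cells of the free $\omega$-precategory $P^*$ such that, for some $i$, both composites $u\ast_iv_1$ and $u\ast_iv_2$ are defined and $u\ast_iv_1=u\ast_iv_2$. Then $v_1=v_2$.
   Context: An $\omega$-precategory is an $\omega$-globular set (sets $C_k$ with sources/targets $s_i,t_i\colon C_{i+1}\to C_i$ satisfying globular identities) with identities $1_u$ and compositions $u\ast_iv\in C_{\max(k,l)}$ for $u\in C_k$, $v\in C_l$, $i=\min(k,l)-1$, $t_i(u)=s_i(v)$, satisfying the axioms of strict $\omega$-categories for sources/targets, units, associativity and distributivity of lower-dimensional over higher-dimensional composition, but not the interchange law. An $\omega$-polygraph $P$ consists of sets $P_k$ of $k$-generators with globular sources and targets in the free precategory on the lower-dimensional generators; $P^*$ is the free $\omega$-precategory generated by $P$ (each generator adjoined as a cell from its source to its target). *)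

theory Defs
  imports Main
begin

text \<open>
  The free omega-precategory P* on an omega-polygraph P is presented by generators
  and relations: cells are (equivalence classes of) well-formed formal terms built
  from the generators, identities and compositions, modulo the congruence generated
  by the axioms of omega-precategories.  The source/target operations are computed
  structurally on terms, so the source/target axioms hold by construction.
\<close>

datatype 'g pterm = Gen 'g | Idt "'g pterm" | Cmp nat "'g pterm" "'g pterm"

record 'g polygraph =
  gdim :: "'g \<Rightarrow> nat"
  gsrc :: "'g \<Rightarrow> 'g pterm"
  gtgt :: "'g \<Rightarrow> 'g pterm"

fun pdim :: "('g, 'x) polygraph_scheme \<Rightarrow> 'g pterm \<Rightarrow> nat" where
  "pdim P (Gen g) = gdim P g"
| "pdim P (Idt u) = Suc (pdim P u)"
| "pdim P (Cmp i u v) = max (pdim P u) (pdim P v)"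

text \<open>Immediate (codimension one) source (b = False) or target (b = True):
  for a cell x of dimension n+1 this is s_n(x) resp. t_n(x).\<close>
fun pbd :: "('g, 'x) polygraph_scheme \<Rightarrow> bool \<Rightarrow> 'g pterm \<Rightarrow> 'g pterm" where
  "pbd P b (Gen g) = (if b then gtgt P g else gsrc P g)"
| "pbd P b (Idt u) = u"
| "pbd P b (Cmp i u v) =
     (if pdim P u = pdim P v then (if b then pbd P b v else pbd P b u)
      else Cmp i (if pdim P u = max (pdim P u) (pdim P v) then pbd P b u else u)
                 (if pdim P v = max (pdim P u) (pdim P v) then pbd P b v else v))"

definition psrc :: "('g, 'x) polygraph_scheme \<Rightarrow> nat \<Rightarrow> 'g pterm \<Rightarrow> 'g pterm" where
  "psrc P j x = (pbd P False ^^ (pdim P x - j)) x"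

definition ptgt :: "('g, 'x) polygraph_scheme \<Rightarrow> nat \<Rightarrow> 'g pterm \<Rightarrow> 'g pterm" where
  "ptgt P j x = (pbd P True ^^ (pdim P x - j)) x"

text \<open>pceq P x y: x and y are well-formed terms denoting the same cell of P*.
  Composition u *_i v of a k-cell and an l-cell is only formed for
  i = min k l - 1 and t_i(u) = s_i(v).\<close>
inductive pceq :: "('g, 'x) polygraph_scheme \<Rightarrow> 'g pterm \<Rightarrow> 'g pterm \<Rightarrow> bool"
  for P :: "('g, 'x) polygraph_scheme" where
  gen: "pceq P (Gen g) (Gen g)"
| idt: "pceq P u u' \<Longrightarrow> pceq P (Idt u) (Idt u')"
| cmp: "pceq P u u' \<Longrightarrow> pceq P v v' \<Longrightarrow> 0 < pdim P u \<Longrightarrow> 0 < pdim P v \<Longrightarrow>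
        i = min (pdim P u) (pdim P v) - 1 \<Longrightarrow> pceq P (ptgt P i u) (psrc P i v) \<Longrightarrow>
        pceq P (Cmp i u v) (Cmp i u' v')"
| sym: "pceq P x y \<Longrightarrow> pceq P y x"
| trans: "pceq P x y \<Longrightarrow> pceq P y z \<Longrightarrow> pceq P x z"
| unit_l: "pceq P u u \<Longrightarrow> i < pdim P u \<Longrightarrow>
        pceq P (Cmp i (Idt (psrc P i u)) u) (Cmp i (Idt (psrc P i u)) u) \<Longrightarrow>
        pceq P (Cmp i (Idt (psrc P i u)) u) u"
| unit_r: "pceq P u u \<Longrightarrow> i < pdim P u \<Longrightarrow>
        pceq P (Cmp i u (Idt (ptgt P i u))) (Cmp i u (Idt (ptgt P i u))) \<Longrightarrow>
        pceq P (Cmp i u (Idt (ptgt P i u))) u"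
| assoc: "pceq P (Cmp i (Cmp i u v) w) (Cmp i (Cmp i u v) w) \<Longrightarrow>
        pceq P (Cmp i u (Cmp i v w)) (Cmp i u (Cmp i v w)) \<Longrightarrow>
        pceq P (Cmp i (Cmp i u v) w) (Cmp i u (Cmp i v w))"
| dist_l: "i < j \<Longrightarrow> pceq P (Cmp i u (Cmp j v w)) (Cmp i u (Cmp j v w)) \<Longrightarrow>
        pceq P (Cmp j (Cmp i u v) (Cmp i u w)) (Cmp j (Cmp i u v) (Cmp i u w)) \<Longrightarrow>
        pceq P (Cmp i u (Cmp j v w)) (Cmp j (Cmp i u v) (Cmp i u w))"
| dist_r: "i < j \<Longrightarrow> pceq P (Cmp i (Cmp j v w) u) (Cmp i (Cmp j v w) u) \<Longrightarrow>
        pceq P (Cmp j (Cmp i v u) (Cmp i w u)) (Cmp j (Cmp i v u) (Cmp i w u)) \<Longrightarrow>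
        pceq P (Cmp i (Cmp j v w) u) (Cmp j (Cmp i v u) (Cmp i w u))"
| id_l: "pceq P (Cmp i u (Idt v)) (Cmp i u (Idt v)) \<Longrightarrow>
        pceq P (Idt (Cmp i u v)) (Idt (Cmp i u v)) \<Longrightarrow>
        pceq P (Cmp i u (Idt v)) (Idt (Cmp i u v))"
| id_r: "pceq P (Cmp i (Idt v) u) (Cmp i (Idt v) u) \<Longrightarrow>
        pceq P (Idt (Cmp i v u)) (Idt (Cmp i v u)) \<Longrightarrow>
        pceq P (Cmp i (Idt v) u) (Idt (Cmp i v u))"

definition pcell :: "('g, 'x) polygraph_scheme \<Rightarrow> 'g pterm \<Rightarrow> bool" where
  "pcell P x \<longleftrightarrow> pceq P x x"

text \<open>Polygraph conditions: the source and target of a (k+1)-generator are parallel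
  k-cells of the free precategory (on generators of dimension at most k, which is
  automatic for terms of dimension k).\<close>
definition omega_polygraph :: "('g, 'x) polygraph_scheme \<Rightarrow> bool" where
  "omega_polygraph P \<longleftrightarrow>
    (\<forall>g. 0 < gdim P g \<longrightarrow>
       pcell P (gsrc P g) \<and> pcell P (gtgt P g) \<and>
       pdim P (gsrc P g) = gdim P g - 1 \<and> pdim P (gtgt P g) = gdim P g - 1 \<and>
       (2 \<le> gdim P g \<longrightarrow>
          pceq P (psrc P (gdim P g - 2) (gsrc P g)) (psrc P (gdim P g - 2) (gtgt P g)) \<and>
          pceq P (ptgt P (gdim P g - 2) (gsrc P g)) (ptgt P (gdim P g - 2) (gtgt P g))))"

end

theory Submission
  imports Defs
begin



datatype 'g wh = WG 'g | WC "'g wh list" "'g wh" "'g wh list"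
datatype 'g nf = NG 'g | NI "'g nf" | NW "'g wh list"

fun wgen :: "'g wh \<Rightarrow> 'g" where
  "wgen (WG g) = g" | "wgen (WC L W R) = wgen W"
fun lay :: "'g wh \<Rightarrow> nat" where
  "lay (WG g) = 0" | "lay (WC L W R) = Suc (lay W)"

fun wl :: "'g wh list \<Rightarrow> nat \<Rightarrow> 'g wh \<Rightarrow> 'g wh" where
  "wl a k (WG g) = WG g"
| "wl a k (WC L W R) = (if Suc (lay W) = k then WC (a @ L) W R
      else if k < Suc (lay W) then WC (map (wl a k) L) (wl a k W) (map (wl a k) R)
      else WC L W R)"

fun wr :: "'g wh list \<Rightarrow> nat \<Rightarrow> 'g wh \<Rightarrow> 'g wh" where
  "wr b k (WG g) = WG g"
| "wr b k (WC L W R) = (if Suc (lay W) = k then WC L W (R @ b)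
      else if k < Suc (lay W) then WC (map (wr b k) L) (wr b k W) (map (wr b k) R)
      else WC L W R)"

fun cl :: "'g nf \<Rightarrow> 'g wh list" where
  "cl (NW ws) = ws" | "cl (NI x) = []" | "cl (NG g) = []"

fun mdim :: "('g,'x) polygraph_scheme \<Rightarrow> 'g nf \<Rightarrow> nat" where
  "mdim P (NG g) = 0"
| "mdim P (NI x) = Suc (mdim P x)"
| "mdim P (NW ws) = (case ws of [] \<Rightarrow> 0 | w # _ \<Rightarrow> gdim P (wgen w))"

fun cat :: "'g nf \<Rightarrow> 'g nf \<Rightarrow> 'g nf" where
  "cat (NI x) V = V"
| "cat (NG g) V = NG g"
| "cat (NW a) V = (case V of NW c \<Rightarrow> NW (a @ c) | NI _ \<Rightarrow> NW a | NG g \<Rightarrow> NG g)"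

primrec lw :: "('g,'x) polygraph_scheme \<Rightarrow> 'g nf \<Rightarrow> 'g nf \<Rightarrow> 'g nf" where
  "lw P U (NG g) = NG g"
| "lw P U (NI y) = NI (if mdim P y = mdim P U then cat U y else lw P U y)"
| "lw P U (NW ws) = NW (map (wl (cl U) (mdim P U)) ws)"

primrec rw :: "('g,'x) polygraph_scheme \<Rightarrow> 'g nf \<Rightarrow> 'g nf \<Rightarrow> 'g nf" where
  "rw P (NG g) V = NG g"
| "rw P (NI x) V = NI (if mdim P x = mdim P V then cat x V else rw P x V)"
| "rw P (NW ws) V = NW (map (wr (cl V) (mdim P V)) ws)"

definition mc :: "('g,'x) polygraph_scheme \<Rightarrow> 'g nf \<Rightarrow> 'g nf \<Rightarrow> 'g nf" where
  "mc P U V = (if mdim P U = mdim P V then cat U V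
     else if mdim P U < mdim P V then lw P U V else rw P U V)"

fun wfull :: "'g \<Rightarrow> nat \<Rightarrow> 'g wh" where
  "wfull g 0 = WG g" | "wfull g (Suc m) = WC [] (wfull g m) []"

primrec eval :: "('g,'x) polygraph_scheme \<Rightarrow> 'g pterm \<Rightarrow> 'g nf" where
  "eval P (Gen g) = (if gdim P g = 0 then NG g else NW [wfull g (gdim P g - 1)])"
| "eval P (Idt u) = NI (eval P u)"
| "eval P (Cmp i u v) = mc P (eval P u) (eval P v)"

definition lcmw :: "('g,'x) polygraph_scheme \<Rightarrow> 'g wh list \<Rightarrow> 'g nf \<Rightarrow> 'g nf" where
  "lcmw P L X = (if L = [] then X else mc P (NW L) X)"
definition rcmw :: "('g,'x) polygraph_scheme \<Rightarrow> 'g nf \<Rightarrow> 'g wh list \<Rightarrow> 'g nf" where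
  "rcmw P X R = (if R = [] then X else mc P X (NW R))"

fun wbd :: "('g,'x) polygraph_scheme \<Rightarrow> bool \<Rightarrow> 'g wh \<Rightarrow> 'g nf" where
  "wbd P b (WG g) = eval P (if b then gtgt P g else gsrc P g)"
| "wbd P b (WC L W R) = lcmw P L (rcmw P (wbd P b W) R)"

fun mbd :: "('g,'x) polygraph_scheme \<Rightarrow> bool \<Rightarrow> 'g nf \<Rightarrow> 'g nf" where
  "mbd P b (NI x) = x"
| "mbd P b (NG g) = NG g"
| "mbd P b (NW ws) = (if ws = [] then NW [] else wbd P b (if b then last ws else hd ws))"

definition mbj :: "('g,'x) polygraph_scheme \<Rightarrow> bool \<Rightarrow> nat \<Rightarrow> 'g nf \<Rightarrow> 'g nf" where
  "mbj P b j X = (mbd P b ^^ (mdim P X - j)) X"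

fun chain :: "nat \<Rightarrow> 'g pterm list \<Rightarrow> 'g pterm" where
  "chain j [] = undefined"
| "chain j [t] = t"
| "chain j (t # ts) = Cmp j t (chain j ts)"

definition lct :: "nat \<Rightarrow> 'g pterm list \<Rightarrow> 'g pterm \<Rightarrow> 'g pterm" where
  "lct j L X = (if L = [] then X else Cmp j (chain j L) X)"
definition rct :: "nat \<Rightarrow> 'g pterm \<Rightarrow> 'g pterm list \<Rightarrow> 'g pterm" where
  "rct j X R = (if R = [] then X else Cmp j X (chain j R))"

fun rbw :: "'g wh \<Rightarrow> 'g pterm" where
  "rbw (WG g) = Gen g"
| "rbw (WC L W R) = lct (lay W) (map rbw L) (rct (lay W) (rbw W) (map rbw R))"

fun rb :: "('g,'x) polygraph_scheme \<Rightarrow> 'g nf \<Rightarrow> 'g pterm" where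
  "rb P (NG g) = Gen g"
| "rb P (NI x) = Idt (rb P x)"
| "rb P (NW ws) = chain (mdim P (NW ws) - 1) (map rbw ws)"




lemma wl_nil[simp]: "wl [] k w = w"
  by (induction w) (auto intro: map_idI)
lemma wr_nil[simp]: "wr [] k w = w"
  by (induction w) (auto intro: map_idI)
lemma lay_wl[simp]: "lay (wl a k w) = lay w"
  by (induction w) auto
lemma lay_wr[simp]: "lay (wr a k w) = lay w"
  by (induction w) auto
lemma wgen_wl[simp]: "wgen (wl a k w) = wgen w"
  by (induction w) auto
lemma wgen_wr[simp]: "wgen (wr a k w) = wgen w"
  by (induction w) auto

lemma wl_app: "wl a k (wl b k w) = wl (a @ b) k w"
  by (induction w) auto
lemma wr_app: "wr b k (wr a k w) = wr (a @ b) k w"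
  by (induction w) auto
lemma wl_wr_same: "wl a k (wr b k w) = wr b k (wl a k w)"
  by (induction w) auto

lemma wl_wl: "m < d \<Longrightarrow> wl a m (wl b d w) = wl (map (wl a m) b) d (wl a m w)"
  by (induction w) auto
lemma wl_wr: "m < d \<Longrightarrow> wl a m (wr b d w) = wr (map (wl a m) b) d (wl a m w)"
  by (induction w) auto
lemma wr_wl: "m < d \<Longrightarrow> wr a m (wl b d w) = wl (map (wr a m) b) d (wr a m w)"
  by (induction w) auto
lemma wr_wr: "m < d \<Longrightarrow> wr a m (wr b d w) = wr (map (wr a m) b) d (wr a m w)"
  by (induction w) auto


lemma map_inj_IH: "(\<And>x. x \<in> set L \<Longrightarrow> (\<And>y. f x = f y \<Longrightarrow> x = y)) \<Longrightarrow> map f L = map f L' \<Longrightarrow> L = L'"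
proof (induction L arbitrary: L')
  case Nil then show ?case by simp
next
  case (Cons a L) then show ?case by (cases L') auto
qed

lemma wl_inj: "wl a k w1 = wl a k w2 \<Longrightarrow> w1 = w2"
proof (induction w1 arbitrary: w2)
  case (WG g) then show ?case by (cases w2) (auto split: if_splits)
next
  case (WC L W R)
  show ?case
  proof (cases w2)
    case (WG g) then show ?thesis using WC.prems by (auto split: if_splits)
  next
    case (WC L' W' R')
    have "lay (wl a k (WC L W R)) = lay (wl a k w2)" using WC.prems by simp
    then have "lay (WC L W R) = lay w2" by (simp only: lay_wl)
    then have lw: "lay W = lay W'" using \<open>w2 = _\<close> by simp
    show ?thesis
    proof (cases "Suc (lay W) = k")
      case True then show ?thesis using WC.prems \<open>w2 = _\<close> lw by simp
    next
      case F: False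
      show ?thesis
      proof (cases "k < Suc (lay W)")
        case True
        then have e: "map (wl a k) L = map (wl a k) L'" "wl a k W = wl a k W'" "map (wl a k) R = map (wl a k) R'"
          using WC.prems \<open>w2 = _\<close> lw F by auto
        have "L = L'" by (rule map_inj_IH[OF _ e(1)]) (use WC.IH(1) in blast)
        moreover have "R = R'" by (rule map_inj_IH[OF _ e(3)]) (use WC.IH(3) in blast)
        moreover have "W = W'" using WC.IH(2) e(2) by blast
        ultimately show ?thesis using \<open>w2 = _\<close> by simp
      next
        case False then show ?thesis using WC.prems \<open>w2 = _\<close> lw F by auto
      qed
    qed
  qed
qed

lemma wr_inj: "wr a k w1 = wr a k w2 \<Longrightarrow> w1 = w2"
proof (induction w1 arbitrary: w2)
  case (WG g) then show ?case by (cases w2) (auto split: if_splits)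
next
  case (WC L W R)
  show ?case
  proof (cases w2)
    case (WG g) then show ?thesis using WC.prems by (auto split: if_splits)
  next
    case (WC L' W' R')
    have "lay (wr a k (WC L W R)) = lay (wr a k w2)" using WC.prems by simp
    then have "lay (WC L W R) = lay w2" by (simp only: lay_wr)
    then have lw: "lay W = lay W'" using \<open>w2 = _\<close> by simp
    show ?thesis
    proof (cases "Suc (lay W) = k")
      case True then show ?thesis using WC.prems \<open>w2 = _\<close> lw by simp
    next
      case F: False
      show ?thesis
      proof (cases "k < Suc (lay W)")
        case True
        then have e: "map (wr a k) L = map (wr a k) L'" "wr a k W = wr a k W'" "map (wr a k) R = map (wr a k) R'"
          using WC.prems \<open>w2 = _\<close> lw F by auto
        have "L = L'" by (rule map_inj_IH[OF _ e(1)]) (use WC.IH(1) in blast)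
        moreover have "R = R'" by (rule map_inj_IH[OF _ e(3)]) (use WC.IH(3) in blast)
        moreover have "W = W'" using WC.IH(2) e(2) by blast
        ultimately show ?thesis using \<open>w2 = _\<close> by simp
      next
        case False then show ?thesis using WC.prems \<open>w2 = _\<close> lw F by auto
      qed
    qed
  qed
qed




lemma mdim_NW_pos: "0 < mdim P (NW ws) \<Longrightarrow> ws \<noteq> []"
  by (cases ws) (auto simp: mdim.simps)

lemma mdim_NW_Cons[simp]: "mdim P (NW (w # ws)) = gdim P (wgen w)" by simp
lemma mdim_NW_Nil[simp]: "mdim P (NW []) = 0" by simp
declare mdim.simps(3)[simp del]

lemma mdim_cat: "mdim P U = mdim P V \<Longrightarrow> mdim P (cat U V) = mdim P U"
proof (cases U)
  case (NW a) then show "mdim P U = mdim P V \<Longrightarrow> ?thesis" by (cases V; cases a) auto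
qed auto

lemma mdim_map_wl[simp]: "mdim P (NW (map (wl a k) ws)) = mdim P (NW ws)"
  by (cases ws) auto
lemma mdim_map_wr[simp]: "mdim P (NW (map (wr a k) ws)) = mdim P (NW ws)"
  by (cases ws) auto

lemma mdim_lw: "mdim P U < mdim P V \<Longrightarrow> mdim P (lw P U V) = mdim P V"
  by (induction V) (auto simp: mdim_cat)

lemma mdim_rw: "mdim P V < mdim P U \<Longrightarrow> mdim P (rw P U V) = mdim P U"
  by (induction U) (auto simp: mdim_cat)

lemma mdim_mc[simp]: "mdim P (mc P U V) = max (mdim P U) (mdim P V)"
  by (auto simp: mc_def mdim_cat mdim_lw mdim_rw)

lemma cl_cat: "0 < mdim P U \<Longrightarrow> mdim P U = mdim P V \<Longrightarrow> cl (cat U V) = cl U @ cl V"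
  by (cases U; cases V) (auto split: list.splits)

lemma cat_assoc: "cat (cat U V) W = cat U (cat V W)"
  by (cases U; cases V; cases W) (auto split: nf.splits)

lemma lw_NI[simp]: "lw P (NI z) V = V"
  by (induction V) (auto intro: map_idI)

lemma mc_NI_left: "mdim P z < mdim P V \<Longrightarrow> mc P (NI z) V = V"
  by (auto simp: mc_def)

lemma mc_NI_right_lw: "mdim P U \<le> mdim P y \<Longrightarrow> mc P U (NI y) = NI (mc P U y)"
  by (auto simp: mc_def)

lemma mc_NI_left_rw: "mdim P V \<le> mdim P x \<Longrightarrow> mc P (NI x) V = NI (mc P x V)"
  by (auto simp: mc_def)

lemma mc_NW_NW_eq: "mdim P (NW a) = mdim P (NW c) \<Longrightarrow> mc P (NW a) (NW c) = NW (a @ c)"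
  by (auto simp: mc_def)

lemma mc_NW_lw: "mdim P U < mdim P (NW ws) \<Longrightarrow> mc P U (NW ws) = NW (map (wl (cl U) (mdim P U)) ws)"
  by (auto simp: mc_def)

lemma mc_NW_rw: "mdim P V < mdim P (NW ws) \<Longrightarrow> mc P (NW ws) V = NW (map (wr (cl V) (mdim P V)) ws)"
  by (auto simp: mc_def)

lemma lw_cat: "0 < mdim P U \<Longrightarrow> mdim P U = mdim P V \<Longrightarrow> mdim P U < mdim P W \<Longrightarrow>
   lw P (cat U V) W = lw P U (lw P V W)"
proof (induction W)
  case (NG g) then show ?case by simp
next
  case (NI y)
  have d: "mdim P (cat U V) = mdim P U" using NI.prems by (simp add: mdim_cat)
  show ?case
  proof (cases "mdim P y = mdim P U")
    case True then show ?thesis using NI.prems d by (simp add: mdim_cat cat_assoc)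
  next
    case False
    then have "mdim P U < mdim P y" using NI.prems by simp
    then show ?thesis using NI.prems NI.IH d False by (simp add: mdim_lw)
  qed
next
  case (NW ws)
  have "cl (cat U V) = cl U @ cl V" using NW.prems by (intro cl_cat) auto
  then show ?case using NW.prems by (simp add: mdim_cat wl_app)
qed

lemma rw_cat: "0 < mdim P V \<Longrightarrow> mdim P V = mdim P W \<Longrightarrow> mdim P V < mdim P U \<Longrightarrow>
   rw P (rw P U V) W = rw P U (cat V W)"
proof (induction U)
  case (NG g) then show ?case by simp
next
  case (NI x)
  have d: "mdim P (cat V W) = mdim P V" using NI.prems by (simp add: mdim_cat)
  show ?case
  proof (cases "mdim P x = mdim P V")
    case True then show ?thesis using NI.prems d by (simp add: mdim_cat cat_assoc)
  next
    case False
    then have "mdim P V < mdim P x" using NI.prems by simp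
    then show ?thesis using NI.prems NI.IH d False by (simp add: mdim_rw)
  qed
next
  case (NW ws)
  have "cl (cat V W) = cl V @ cl W" using NW.prems by (intro cl_cat) auto
  then show ?case using NW.prems by (simp add: mdim_cat wr_app)
qed

lemma lw_rw: "mdim P U = mdim P W \<Longrightarrow> mdim P U < mdim P V \<Longrightarrow>
   rw P (lw P U V) W = lw P U (rw P V W)"
proof (induction V)
  case (NG g) then show ?case by simp
next
  case (NI y)
  show ?case
  proof (cases "mdim P y = mdim P U")
    case True then show ?thesis using NI.prems by (simp add: mdim_cat cat_assoc)
  next
    case False
    then have "mdim P U < mdim P y" using NI.prems by simp
    then show ?thesis using NI.prems NI.IH False by (simp add: mdim_lw mdim_rw)
  qed
next
  case (NW ws) then show ?case by (simp add: wl_wr_same)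
qed

lemma mc_assoc:
  assumes p: "0 < mdim P U" "0 < mdim P V" "0 < mdim P W"
    and c: "(mdim P V \<le> mdim P U \<and> mdim P V \<le> mdim P W \<and> \<not> (mdim P V < mdim P U \<and> mdim P V < mdim P W))
            \<or> (mdim P U = mdim P W \<and> mdim P U < mdim P V)"
  shows "mc P (mc P U V) W = mc P U (mc P V W)"
proof -
  consider (A) "mdim P U = mdim P V" "mdim P V = mdim P W"
    | (B) "mdim P U = mdim P V" "mdim P V < mdim P W"
    | (C) "mdim P V = mdim P W" "mdim P V < mdim P U"
    | (D) "mdim P U = mdim P W" "mdim P U < mdim P V"
    using c by linarith
  then show ?thesis
  proof cases
    case A then show ?thesis by (simp add: mc_def mdim_cat cat_assoc)
  next
    case B then show ?thesis using p by (simp add: mc_def mdim_cat mdim_lw lw_cat)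
  next
    case C then show ?thesis using p by (simp add: mc_def mdim_cat mdim_rw rw_cat)
  next
    case D then show ?thesis using p by (simp add: mc_def mdim_lw mdim_rw lw_rw)
  qed
qed




lemma cl_lw: "cl (lw P U V) = map (wl (cl U) (mdim P U)) (cl V)"
  by (cases V) auto
lemma cl_rw: "cl (rw P U V) = map (wr (cl V) (mdim P V)) (cl U)"
  by (cases U) auto

lemma lw_cat_dist: "mdim P U < mdim P V \<Longrightarrow> mdim P V = mdim P W \<Longrightarrow>
   lw P U (cat V W) = cat (lw P U V) (lw P U W)"
proof (cases V)
  case (NW a)
  then show "mdim P U < mdim P V \<Longrightarrow> mdim P V = mdim P W \<Longrightarrow> ?thesis"
    by (cases W) auto
qed auto

lemma rw_cat_dist: "mdim P U < mdim P V \<Longrightarrow> mdim P V = mdim P W \<Longrightarrow>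
   rw P (cat V W) U = cat (rw P V U) (rw P W U)"
proof (cases V)
  case (NW a)
  then show "mdim P U < mdim P V \<Longrightarrow> mdim P V = mdim P W \<Longrightarrow> ?thesis"
    by (cases W) auto
qed auto

lemma lw_lw: "mdim P U < mdim P V \<Longrightarrow> mdim P V < mdim P W \<Longrightarrow>
   lw P U (lw P V W) = lw P (lw P U V) (lw P U W)"
proof (induction W)
  case (NG g) then show ?case by simp
next
  case (NI z)
  have z: "mdim P V \<le> mdim P z" using NI.prems by simp
  show ?case
  proof (cases "mdim P z = mdim P V")
    case True
    then show ?thesis using NI.prems z by (simp add: mdim_cat mdim_lw lw_cat_dist)
  next
    case False
    then show ?thesis using NI.prems z NI.IH by (simp add: mdim_cat mdim_lw)
  qed
next
  case (NW ws) then show ?case by (simp add: cl_lw mdim_lw wl_wl)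
qed

lemma lw_rw_dist: "mdim P U < mdim P W \<Longrightarrow> mdim P W < mdim P V \<Longrightarrow>
   lw P U (rw P V W) = rw P (lw P U V) (lw P U W)"
proof (induction V)
  case (NG g) then show ?case by simp
next
  case (NI y)
  have y: "mdim P W \<le> mdim P y" using NI.prems by simp
  show ?case
  proof (cases "mdim P y = mdim P W")
    case True
    then show ?thesis using NI.prems y by (simp add: mdim_cat mdim_lw mdim_rw lw_cat_dist)
  next
    case False
    then show ?thesis using NI.prems y NI.IH by (simp add: mdim_cat mdim_lw mdim_rw)
  qed
next
  case (NW ws) then show ?case by (simp add: cl_lw mdim_lw wl_wr)
qed

lemma rw_lw_dist: "mdim P U < mdim P V \<Longrightarrow> mdim P V < mdim P W \<Longrightarrow>
   rw P (lw P V W) U = lw P (rw P V U) (rw P W U)"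
proof (induction W)
  case (NG g) then show ?case by simp
next
  case (NI z)
  have z: "mdim P V \<le> mdim P z" using NI.prems by simp
  show ?case
  proof (cases "mdim P z = mdim P V")
    case True
    then show ?thesis using NI.prems z by (simp add: mdim_cat mdim_lw mdim_rw rw_cat_dist)
  next
    case False
    then show ?thesis using NI.prems z NI.IH by (simp add: mdim_cat mdim_lw mdim_rw)
  qed
next
  case (NW ws) then show ?case by (simp add: cl_rw mdim_rw wr_wl)
qed

lemma rw_rw_dist: "mdim P U < mdim P W \<Longrightarrow> mdim P W < mdim P V \<Longrightarrow>
   rw P (rw P V W) U = rw P (rw P V U) (rw P W U)"
proof (induction V)
  case (NG g) then show ?case by simp
next
  case (NI y)
  have y: "mdim P W \<le> mdim P y" using NI.prems by simp
  show ?case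
  proof (cases "mdim P y = mdim P W")
    case True
    then show ?thesis using NI.prems y by (simp add: mdim_cat mdim_rw rw_cat_dist)
  next
    case False
    then show ?thesis using NI.prems y NI.IH by (simp add: mdim_cat mdim_rw)
  qed
next
  case (NW ws) then show ?case by (simp add: cl_rw mdim_rw wr_wr)
qed

lemma mc_dist_l:
  assumes "mdim P U < mdim P V" "mdim P U < mdim P W"
  shows "mc P U (mc P V W) = mc P (mc P U V) (mc P U W)"
proof -
  consider "mdim P V = mdim P W" | "mdim P V < mdim P W" | "mdim P W < mdim P V" by linarith
  then show ?thesis
  proof cases
    case 1 then show ?thesis using assms by (simp add: mc_def mdim_cat mdim_lw lw_cat_dist)
  next
    case 2 then show ?thesis using assms by (simp add: mc_def mdim_lw lw_lw)
  next
    case 3 then show ?thesis using assms by (simp add: mc_def mdim_lw mdim_rw lw_rw_dist)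
  qed
qed

lemma mc_dist_r:
  assumes "mdim P U < mdim P V" "mdim P U < mdim P W"
  shows "mc P (mc P V W) U = mc P (mc P V U) (mc P W U)"
proof -
  consider "mdim P V = mdim P W" | "mdim P V < mdim P W" | "mdim P W < mdim P V" by linarith
  then show ?thesis
  proof cases
    case 1 then show ?thesis using assms by (simp add: mc_def mdim_cat mdim_rw rw_cat_dist)
  next
    case 2 then show ?thesis using assms by (simp add: mc_def mdim_lw mdim_rw rw_lw_dist)
  next
    case 3 then show ?thesis using assms by (simp add: mc_def mdim_rw rw_rw_dist)
  qed
qed

lemma mbj_triv: "mdim P X \<le> j \<Longrightarrow> mbj P b j X = X"
  by (simp add: mbj_def)

lemma mbj_NI: "j \<le> mdim P x \<Longrightarrow> mbj P b j (NI x) = mbj P b j x"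
proof -
  assume "j \<le> mdim P x"
  then have "Suc (mdim P x) - j = Suc (mdim P x - j)" by simp
  then show ?thesis by (simp add: mbj_def funpow_Suc_right del: funpow.simps)
qed

lemma mc_right_unit:
  "i < mdim P U \<Longrightarrow> mdim P Z = i \<Longrightarrow> Z = mbj P b i U \<Longrightarrow> mc P U (NI Z) = U"
proof (induction U)
  case (NG g) then show ?case by simp
next
  case (NI x)
  show ?case
  proof (cases "mdim P x = i")
    case True
    then have "Z = x" using NI.prems by (simp add: mbj_NI mbj_triv)
    then show ?thesis using True by (simp add: mc_def)
  next
    case False
    then have lt: "i < mdim P x" using NI.prems by simp
    then have "Z = mbj P b i x" using NI.prems by (simp add: mbj_NI)
    then have "mc P x (NI Z) = x" using NI.IH lt NI.prems by blast
    moreover have "mc P (NI x) (NI Z) = NI (mc P x (NI Z))"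
      using lt NI.prems by (intro mc_NI_left_rw) simp
    ultimately show ?thesis by simp
  qed
next
  case (NW ws)
  then show ?case by (auto simp: mc_def intro: map_idI)
qed




definition bdj :: "('g,'x) polygraph_scheme \<Rightarrow> bool \<Rightarrow> nat \<Rightarrow> 'g pterm \<Rightarrow> 'g pterm" where
  "bdj P b j x = (pbd P b ^^ (pdim P x - j)) x"

lemma psrc_bdj: "psrc P j x = bdj P False j x" by (simp add: psrc_def bdj_def)
lemma ptgt_bdj: "ptgt P j x = bdj P True j x" by (simp add: ptgt_def bdj_def)

fun gens :: "'g pterm \<Rightarrow> 'g set" where
  "gens (Gen g) = {g}" | "gens (Idt u) = gens u" | "gens (Cmp i u v) = gens u \<union> gens v"

lemma gens_le: "g \<in> gens x \<Longrightarrow> gdim P g \<le> pdim P x"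
  by (induction x) auto

lemma omega_dims:
  assumes "omega_polygraph P" "0 < gdim P g"
  shows "pdim P (gsrc P g) = gdim P g - 1" "pdim P (gtgt P g) = gdim P g - 1"
    "pcell P (gsrc P g)" "pcell P (gtgt P g)"
  using assms by (auto simp: omega_polygraph_def)

lemma pdim_pbd: "omega_polygraph P \<Longrightarrow> 0 < pdim P x \<Longrightarrow> pdim P (pbd P b x) = pdim P x - 1"
  by (induction x) (auto simp: omega_dims)

lemma pdim_pbd_pow: "omega_polygraph P \<Longrightarrow> n \<le> pdim P x \<Longrightarrow> pdim P ((pbd P b ^^ n) x) = pdim P x - n"
proof (induction n)
  case 0 then show ?case by simp
next
  case (Suc n)
  then show ?case by (auto simp: pdim_pbd)
qed

lemma pdim_bdj: "omega_polygraph P \<Longrightarrow> pdim P (bdj P b j x) = min j (pdim P x)"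
  by (simp add: bdj_def pdim_pbd_pow)

lemma bdj_triv: "pdim P x \<le> j \<Longrightarrow> bdj P b j x = x"
  by (simp add: bdj_def)

lemma bdj_step: "omega_polygraph P \<Longrightarrow> j < pdim P x \<Longrightarrow> bdj P b j x = bdj P b j (pbd P b x)"
proof -
  assume o: "omega_polygraph P" and j: "j < pdim P x"
  then have "pdim P x - j = Suc (pdim P (pbd P b x) - j)" by (simp add: pdim_pbd)
  then show ?thesis by (simp add: bdj_def funpow_Suc_right del: funpow.simps)
qed

lemma bdj_Idt: "omega_polygraph P \<Longrightarrow> j \<le> pdim P u \<Longrightarrow> bdj P b j (Idt u) = bdj P b j u"
  by (subst bdj_step) auto

lemma bdj_Gen: "omega_polygraph P \<Longrightarrow> j < gdim P g \<Longrightarrow>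
   bdj P b j (Gen g) = bdj P b j (if b then gtgt P g else gsrc P g)"
  by (subst bdj_step) auto

lemma bdj_bdj: "omega_polygraph P \<Longrightarrow> j \<le> k \<Longrightarrow> bdj P b j (bdj P b k x) = bdj P b j x"
proof -
  assume o: "omega_polygraph P" and jk: "j \<le> k"
  show ?thesis
  proof (cases "pdim P x \<le> k")
    case True then show ?thesis by (simp add: bdj_triv)
  next
    case False
    then have "pdim P (bdj P b k x) = k" using o by (simp add: pdim_bdj)
    then have "bdj P b j (bdj P b k x) = (pbd P b ^^ (k - j)) ((pbd P b ^^ (pdim P x - k)) x)"
      by (simp add: bdj_def)
    also have "\<dots> = (pbd P b ^^ ((k - j) + (pdim P x - k))) x"
      by (simp add: funpow_add)
    also have "(k - j) + (pdim P x - k) = pdim P x - j" using False jk by simp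
    finally show ?thesis by (simp add: bdj_def)
  qed
qed

definition wfd :: "('g,'x) polygraph_scheme \<Rightarrow> nat \<Rightarrow> 'g pterm \<Rightarrow> 'g pterm \<Rightarrow> bool" where
  "wfd P i u v \<longleftrightarrow> 0 < pdim P u \<and> 0 < pdim P v \<and> i = min (pdim P u) (pdim P v) - 1"

lemma bdj_Cmp_gen:
  assumes o: "omega_polygraph P"
  shows "wfd P i u v \<Longrightarrow> max (pdim P u) (pdim P v) - j = n \<Longrightarrow>
    bdj P b j (Cmp i u v) = (if max (pdim P u) (pdim P v) \<le> j then Cmp i u v
      else if min (pdim P u) (pdim P v) \<le> j then Cmp i (bdj P b j u) (bdj P b j v)
      else if b then bdj P b j v else bdj P b j u)"
proof (induction n arbitrary: u v)
  case 0 then show ?case by (simp add: bdj_triv)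
next
  case (Suc n)
  have jlt: "j < pdim P (Cmp i u v)" using Suc.prems by simp
  have st: "bdj P b j (Cmp i u v) = bdj P b j (pbd P b (Cmp i u v))" using bdj_step[OF o jlt] .
  consider "pdim P u = pdim P v" | "pdim P v < pdim P u" | "pdim P u < pdim P v" by linarith
  then show ?case
  proof cases
    case 1
    then show ?thesis using st Suc.prems o by (auto simp: bdj_step[symmetric])
  next
    case 2
    have pb: "pbd P b (Cmp i u v) = Cmp i (pbd P b u) v" using 2 by simp
    have du: "pdim P (pbd P b u) = pdim P u - 1" using 2 o by (simp add: pdim_pbd)
    have w: "wfd P i (pbd P b u) v" using Suc.prems 2 du by (auto simp: wfd_def)
    have IH: "bdj P b j (Cmp i (pbd P b u) v) = (if max (pdim P (pbd P b u)) (pdim P v) \<le> j then Cmp i (pbd P b u) v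
      else if min (pdim P (pbd P b u)) (pdim P v) \<le> j then Cmp i (bdj P b j (pbd P b u)) (bdj P b j v)
      else if b then bdj P b j v else bdj P b j (pbd P b u))"
      using Suc.IH[OF w] Suc.prems du 2 by simp
    have e1: "j < pdim P u \<Longrightarrow> bdj P b j (pbd P b u) = bdj P b j u" using o by (simp add: bdj_step)
    show ?thesis
    proof (cases "pdim P u - 1 \<le> j")
      case True
      then have "pdim P u - 1 = j" using Suc.prems 2 by simp
      then have "pdim P u - j = Suc 0" using 2 by simp
      then have "bdj P b j u = pbd P b u"
        by (simp add: bdj_def)
      moreover have "pdim P v \<le> j" "\<not> pdim P u \<le> j" using True 2 Suc.prems by auto
      ultimately show ?thesis using st pb IH du True 2 Suc.prems by (simp add: bdj_triv)
    next
      case False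
      then show ?thesis using st pb IH du 2 Suc.prems e1 by auto
    qed
  next
    case 3
    have pb: "pbd P b (Cmp i u v) = Cmp i u (pbd P b v)" using 3 by simp
    have dv: "pdim P (pbd P b v) = pdim P v - 1" using 3 o by (simp add: pdim_pbd)
    have w: "wfd P i u (pbd P b v)" using Suc.prems 3 dv by (auto simp: wfd_def)
    have IH: "bdj P b j (Cmp i u (pbd P b v)) = (if max (pdim P u) (pdim P (pbd P b v)) \<le> j then Cmp i u (pbd P b v)
      else if min (pdim P u) (pdim P (pbd P b v)) \<le> j then Cmp i (bdj P b j u) (bdj P b j (pbd P b v))
      else if b then bdj P b j (pbd P b v) else bdj P b j u)"
      using Suc.IH[OF w] Suc.prems dv 3 by simp
    have e1: "j < pdim P v \<Longrightarrow> bdj P b j (pbd P b v) = bdj P b j v" using o by (simp add: bdj_step)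
    show ?thesis
    proof (cases "pdim P v - 1 \<le> j")
      case True
      then have "pdim P v - 1 = j" using Suc.prems 3 by simp
      then have "pdim P v - j = Suc 0" using 3 by simp
      then have "bdj P b j v = pbd P b v"
        by (simp add: bdj_def)
      moreover have "pdim P u \<le> j" "\<not> pdim P v \<le> j" using True 3 Suc.prems by auto
      ultimately show ?thesis using st pb IH dv True 3 Suc.prems by (simp add: bdj_triv)
    next
      case False
      then show ?thesis using st pb IH dv 3 Suc.prems e1 by auto
    qed
  qed
qed

lemma bdj_Cmp:
  assumes "omega_polygraph P" "wfd P i u v"
  shows "bdj P b j (Cmp i u v) = (if max (pdim P u) (pdim P v) \<le> j then Cmp i u v
      else if min (pdim P u) (pdim P v) \<le> j then Cmp i (bdj P b j u) (bdj P b j v)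
      else if b then bdj P b j v else bdj P b j u)"
  using bdj_Cmp_gen[OF assms(1) assms(2) refl] .




fun wsh :: "('g,'x) polygraph_scheme \<Rightarrow> 'g wh \<Rightarrow> bool" where
  "wsh P (WG g) = (0 < gdim P g)"
| "wsh P (WC L W R) = (wsh P W \<and> Suc (lay W) < gdim P (wgen W) \<and>
      (\<forall>x \<in> set L \<union> set R. wsh P x \<and> gdim P (wgen x) = Suc (lay W) \<and> lay x = lay W))"

definition wok :: "('g,'x) polygraph_scheme \<Rightarrow> nat \<Rightarrow> 'g wh list \<Rightarrow> bool" where
  "wok P k a \<longleftrightarrow> (\<forall>x\<in>set a. wsh P x \<and> gdim P (wgen x) = k \<and> Suc (lay x) = k)"

fun csh :: "('g,'x) polygraph_scheme \<Rightarrow> 'g nf \<Rightarrow> bool" where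
  "csh P (NG g) = (gdim P g = 0)"
| "csh P (NI x) = csh P x"
| "csh P (NW ws) = (ws \<noteq> [] \<and> wok P (mdim P (NW ws)) ws)"

lemma wok_app[simp]: "wok P k (a @ b) \<longleftrightarrow> wok P k a \<and> wok P k b"
  by (auto simp: wok_def)

lemma wsh_wl: "wsh P w \<Longrightarrow> wok P k a \<Longrightarrow> wsh P (wl a k w)"
  by (induction w) (auto simp: wok_def)
lemma wsh_wr: "wsh P w \<Longrightarrow> wok P k a \<Longrightarrow> wsh P (wr a k w)"
  by (induction w) (auto simp: wok_def)

lemma wok_map_wl: "wok P d ws \<Longrightarrow> wok P k a \<Longrightarrow> wok P d (map (wl a k) ws)"
  by (auto simp: wok_def wsh_wl)
lemma wok_map_wr: "wok P d ws \<Longrightarrow> wok P k a \<Longrightarrow> wok P d (map (wr a k) ws)"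
  by (auto simp: wok_def wsh_wr)

lemma wok_cl: "csh P U \<Longrightarrow> wok P (mdim P U) (cl U)"
  by (cases U) (auto simp: wok_def)

lemma csh_cat: "csh P U \<Longrightarrow> csh P V \<Longrightarrow> mdim P U = mdim P V \<Longrightarrow> csh P (cat U V)"
proof (cases U)
  case (NW a)
  then show "csh P U \<Longrightarrow> csh P V \<Longrightarrow> mdim P U = mdim P V \<Longrightarrow> ?thesis"
    by (cases V; cases a) (auto simp: wok_def)
qed auto

lemma csh_lw: "csh P U \<Longrightarrow> csh P V \<Longrightarrow> mdim P U < mdim P V \<Longrightarrow> csh P (lw P U V)"
proof (induction V)
  case (NW ws)
  have "ws \<noteq> []" "wok P (mdim P (NW ws)) ws" using NW.prems by auto
  then show ?case using wok_map_wl[OF _ wok_cl[OF NW.prems(1)]] by simp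
qed (auto simp: csh_cat)

lemma csh_rw: "csh P U \<Longrightarrow> csh P V \<Longrightarrow> mdim P V < mdim P U \<Longrightarrow> csh P (rw P U V)"
proof (induction U)
  case (NW ws)
  have "ws \<noteq> []" "wok P (mdim P (NW ws)) ws" using NW.prems by auto
  then show ?case using wok_map_wr[OF _ wok_cl[OF NW.prems(2)]] by simp
qed (auto simp: csh_cat)

lemma csh_mc: "csh P U \<Longrightarrow> csh P V \<Longrightarrow> csh P (mc P U V)"
  by (auto simp: mc_def csh_cat csh_lw csh_rw)

lemma wfull_props: "wgen (wfull g m) = g" "lay (wfull g m) = m"
  by (induction m) auto

lemma wsh_wfull: "m < gdim P g \<Longrightarrow> wsh P (wfull g m)"
  by (induction m) (auto simp: wfull_props)

lemma csh_eval: "csh P (eval P x)"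
  by (induction x) (auto simp: csh_mc wok_def wsh_wfull wfull_props)

lemma mdim_eval[simp]: "mdim P (eval P x) = pdim P x"
  by (induction x) (auto simp: wfull_props)

lemma mdim_wbd: "omega_polygraph P \<Longrightarrow> wsh P w \<Longrightarrow> mdim P (wbd P b w) = gdim P (wgen w) - 1"
proof (induction w)
  case (WG g) then show ?case by (auto simp: omega_dims)
next
  case (WC L W R)
  have L: "L \<noteq> [] \<Longrightarrow> mdim P (NW L) = Suc (lay W)" using WC.prems by (cases L) auto
  have R: "R \<noteq> [] \<Longrightarrow> mdim P (NW R) = Suc (lay W)" using WC.prems by (cases R) auto
  have "mdim P (wbd P b W) = gdim P (wgen W) - 1" using WC by auto
  then show ?case using WC.prems L R by (auto simp: lcmw_def rcmw_def)
qed

lemma WB_l: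
  assumes o: "omega_polygraph P"
  shows "wsh P w \<Longrightarrow> a \<noteq> [] \<Longrightarrow> wok P k a \<Longrightarrow> k \<le> lay w \<Longrightarrow>
     wbd P b (wl a k w) = mc P (NW a) (wbd P b w)"
proof (induction w)
  case (WG g) then show ?case by (auto simp: wok_def neq_Nil_conv)
next
  case (WC L W R)
  have ka: "mdim P (NW a) = k" using WC.prems by (auto simp: wok_def neq_Nil_conv)
  have k1: "1 \<le> k" using WC.prems by (auto simp: wok_def neq_Nil_conv)
  define n where "n = gdim P (wgen W)"
  have dW: "mdim P (wbd P b W) = n - 1" using mdim_wbd[OF o] WC.prems n_def by auto
  have dlt: "Suc (lay W) < n" using WC.prems n_def by auto
  have L: "L \<noteq> [] \<Longrightarrow> mdim P (NW L) = Suc (lay W)" using WC.prems by (cases L) auto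
  have R: "R \<noteq> [] \<Longrightarrow> mdim P (NW R) = Suc (lay W)" using WC.prems by (cases R) auto
  define Y0 where "Y0 = wbd P b W"
  define Y where "Y = rcmw P Y0 R"
  have dY: "mdim P Y = n - 1" using dW dlt R by (auto simp: Y_def Y0_def rcmw_def)
  show ?case
  proof (cases "Suc (lay W) = k")
    case True
    have "wbd P b (wl a k (WC L W R)) = lcmw P (a @ L) Y" using True by (simp add: Y_def Y0_def)
    also have "\<dots> = mc P (NW a) (lcmw P L Y)"
    proof (cases "L = []")
      case True then show ?thesis using WC.prems by (simp add: lcmw_def)
    next
      case False
      have "mc P (NW (a @ L)) Y = mc P (mc P (NW a) (NW L)) Y"
        using L False ka True by (simp add: mc_NW_NW_eq)
      also have "\<dots> = mc P (NW a) (mc P (NW L) Y)"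
        using L False ka True dY dlt k1 by (intro mc_assoc) auto
      finally show ?thesis using False WC.prems by (simp add: lcmw_def)
    qed
    finally show ?thesis by (simp add: Y_def Y0_def)
  next
    case False
    then have lt: "k < Suc (lay W)" using WC.prems by simp
    have IH: "wbd P b (wl a k W) = mc P (NW a) Y0"
      using WC.IH(2) WC.prems lt by (simp add: Y0_def)
    have r: "rcmw P (mc P (NW a) Y0) (map (wl a k) R) = mc P (NW a) Y"
    proof (cases "R = []")
      case True then show ?thesis by (simp add: rcmw_def Y_def)
    next
      case False
      have e: "NW (map (wl a k) R) = mc P (NW a) (NW R)"
        using mc_NW_lw[of P "NW a" R] ka lt R False by simp
      have "mc P (mc P (NW a) Y0) (mc P (NW a) (NW R)) = mc P (NW a) (mc P Y0 (NW R))"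
        using ka lt R False dW dlt by (intro mc_dist_l[symmetric]) (auto simp: Y0_def)
      then show ?thesis using False e by (simp add: rcmw_def Y_def)
    qed
    have "lcmw P (map (wl a k) L) (mc P (NW a) Y) = mc P (NW a) (lcmw P L Y)"
    proof (cases "L = []")
      case True then show ?thesis by (simp add: lcmw_def)
    next
      case False
      have e: "NW (map (wl a k) L) = mc P (NW a) (NW L)"
        using mc_NW_lw[of P "NW a" L] ka lt L False by simp
      have "mc P (mc P (NW a) (NW L)) (mc P (NW a) Y) = mc P (NW a) (mc P (NW L) Y)"
        using ka lt L False dY dlt by (intro mc_dist_l[symmetric]) auto
      then show ?thesis using False e by (simp add: lcmw_def)
    qed
    then show ?thesis using lt False IH r by (simp add: Y_def Y0_def)
  qed
qed

lemma WB_r: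
  assumes o: "omega_polygraph P"
  shows "wsh P w \<Longrightarrow> a \<noteq> [] \<Longrightarrow> wok P k a \<Longrightarrow> k \<le> lay w \<Longrightarrow>
     wbd P b (wr a k w) = mc P (wbd P b w) (NW a)"
proof (induction w)
  case (WG g) then show ?case by (auto simp: wok_def neq_Nil_conv)
next
  case (WC L W R)
  have ka: "mdim P (NW a) = k" using WC.prems by (auto simp: wok_def neq_Nil_conv)
  have k1: "1 \<le> k" using WC.prems by (auto simp: wok_def neq_Nil_conv)
  define n where "n = gdim P (wgen W)"
  have dW: "mdim P (wbd P b W) = n - 1" using mdim_wbd[OF o] WC.prems n_def by auto
  have dlt: "Suc (lay W) < n" using WC.prems n_def by auto
  have L: "L \<noteq> [] \<Longrightarrow> mdim P (NW L) = Suc (lay W)" using WC.prems by (cases L) auto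
  have R: "R \<noteq> [] \<Longrightarrow> mdim P (NW R) = Suc (lay W)" using WC.prems by (cases R) auto
  define Y0 where "Y0 = wbd P b W"
  show ?case
  proof (cases "Suc (lay W) = k")
    case True
    have r: "rcmw P Y0 (R @ a) = mc P (rcmw P Y0 R) (NW a)"
    proof (cases "R = []")
      case True then show ?thesis using WC.prems by (simp add: rcmw_def)
    next
      case False
      have "mc P Y0 (NW (R @ a)) = mc P Y0 (mc P (NW R) (NW a))"
        using R False ka True by (simp add: mc_NW_NW_eq)
      also have "\<dots> = mc P (mc P Y0 (NW R)) (NW a)"
        using R False ka True dW dlt k1 by (intro mc_assoc[symmetric]) (auto simp: Y0_def)
      finally show ?thesis using False WC.prems by (simp add: rcmw_def)
    qed
    have dr: "mdim P (rcmw P Y0 R) = n - 1" using dW dlt R by (auto simp: Y0_def rcmw_def)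
    have l: "lcmw P L (mc P (rcmw P Y0 R) (NW a)) = mc P (lcmw P L (rcmw P Y0 R)) (NW a)"
    proof (cases "L = []")
      case True then show ?thesis by (simp add: lcmw_def)
    next
      case False
      show ?thesis using False L ka True dr dlt k1
        by (simp add: lcmw_def, intro mc_assoc[symmetric]) auto
    qed
    show ?thesis using True r l by (simp add: Y0_def)
  next
    case False
    then have lt: "k < Suc (lay W)" using WC.prems by simp
    have IH: "wbd P b (wr a k W) = mc P Y0 (NW a)"
      using WC.IH(2) WC.prems lt by (simp add: Y0_def)
    have r: "rcmw P (mc P Y0 (NW a)) (map (wr a k) R) = mc P (rcmw P Y0 R) (NW a)"
    proof (cases "R = []")
      case True then show ?thesis by (simp add: rcmw_def)
    next
      case False
      have e: "NW (map (wr a k) R) = mc P (NW R) (NW a)"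
        using mc_NW_rw[of P "NW a" R] ka lt R False by simp
      have "mc P (mc P Y0 (NW a)) (mc P (NW R) (NW a)) = mc P (mc P Y0 (NW R)) (NW a)"
        using ka lt R False dW dlt by (intro mc_dist_r[symmetric]) (auto simp: Y0_def)
      then show ?thesis using False e by (simp add: rcmw_def)
    qed
    have dr: "mdim P (rcmw P Y0 R) = n - 1" using dW dlt R by (auto simp: Y0_def rcmw_def)
    have "lcmw P (map (wr a k) L) (mc P (rcmw P Y0 R) (NW a)) = mc P (lcmw P L (rcmw P Y0 R)) (NW a)"
    proof (cases "L = []")
      case True then show ?thesis by (simp add: lcmw_def)
    next
      case False
      have e: "NW (map (wr a k) L) = mc P (NW L) (NW a)"
        using mc_NW_rw[of P "NW a" L] ka lt L False by simp
      have "mc P (mc P (NW L) (NW a)) (mc P (rcmw P Y0 R) (NW a)) = mc P (mc P (NW L) (rcmw P Y0 R)) (NW a)"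
        using ka lt L False dr dlt by (intro mc_dist_r[symmetric]) auto
      then show ?thesis using False e by (simp add: lcmw_def)
    qed
    then show ?thesis using lt False IH r by (simp add: Y0_def)
  qed
qed




lemma wl_nil_fun[simp]: "wl [] k = (\<lambda>w. w)" by (rule ext) simp
lemma wr_nil_fun[simp]: "wr [] k = (\<lambda>w. w)" by (rule ext) simp

lemma mbd_NW_map: "ws \<noteq> [] \<Longrightarrow> mbd P b (NW (map f ws)) = wbd P b (f (if b then last ws else hd ws))"
  by (auto simp: last_map hd_map)

lemma OS_lw:
  assumes o: "omega_polygraph P" and cU: "csh P U" and cV: "csh P V"
    and d0: "0 < mdim P U" and dlt: "mdim P U < mdim P V"
  shows "mbd P b (mc P U V) = mc P U (mbd P b V)"
proof (cases V)
  case (NG g) then show ?thesis using dlt by simp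
next
  case (NI y)
  then show ?thesis using dlt by (simp add: mc_NI_right_lw)
next
  case (NW ws)
  have ne: "ws \<noteq> []" and wk: "wok P (mdim P V) ws" using cV NW by auto
  define w where "w = (if b then last ws else hd ws)"
  have win: "w \<in> set ws" using ne by (auto simp: w_def)
  then have ww: "wsh P w" "gdim P (wgen w) = mdim P V" "Suc (lay w) = mdim P V"
    using wk by (auto simp: wok_def)
  have e1: "mc P U V = NW (map (wl (cl U) (mdim P U)) ws)" using NW dlt by (simp add: mc_NW_lw)
  have e2: "mbd P b V = wbd P b w" using NW ne by (simp add: w_def)
  have dwb: "mdim P (wbd P b w) = mdim P V - 1" using mdim_wbd[OF o ww(1)] ww by simp
  show ?thesis
  proof (cases U)
    case (NG g) then show ?thesis using d0 by simp
  next
    case (NI x)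
    have "mc P (NI x) (wbd P b w) = wbd P b w" by (rule mc_NI_left) (use NI dwb dlt in simp)
    then show ?thesis using e1 e2 NI ne by (simp add: mbd_NW_map w_def[symmetric])
  next
    case (NW a)
    have "a \<noteq> []" "wok P (mdim P U) a" using cU NW by auto
    then have "wbd P b (wl a (mdim P U) w) = mc P (NW a) (wbd P b w)"
      using WB_l[OF o ww(1)] ww dlt NW by auto
    moreover have "mbd P b (NW (map (wl a (mdim P U)) ws)) = wbd P b (wl a (mdim P U) w)"
      using ne by (cases b) (simp_all add: w_def last_map hd_map)
    ultimately show ?thesis using e1 e2 NW by simp
  qed
qed

lemma OS_rw:
  assumes o: "omega_polygraph P" and cU: "csh P U" and cV: "csh P V"
    and d0: "0 < mdim P V" and dlt: "mdim P V < mdim P U"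
    and ru: "\<And>x. V = NI x \<Longrightarrow> x = mbj P True (mdim P x) (mbd P b U)"
  shows "mbd P b (mc P U V) = mc P (mbd P b U) V"
proof (cases U)
  case (NG g) then show ?thesis using dlt by simp
next
  case (NI y)
  then show ?thesis using dlt by (simp add: mc_NI_left_rw)
next
  case (NW ws)
  have ne: "ws \<noteq> []" and wk: "wok P (mdim P U) ws" using cU NW by auto
  define w where "w = (if b then last ws else hd ws)"
  have win: "w \<in> set ws" using ne by (auto simp: w_def)
  then have ww: "wsh P w" "gdim P (wgen w) = mdim P U" "Suc (lay w) = mdim P U"
    using wk by (auto simp: wok_def)
  have e1: "mc P U V = NW (map (wr (cl V) (mdim P V)) ws)" using NW dlt by (simp add: mc_NW_rw)
  have e2: "mbd P b U = wbd P b w" using NW ne by (simp add: w_def)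
  have dwb: "mdim P (wbd P b w) = mdim P U - 1" using mdim_wbd[OF o ww(1)] ww by simp
  show ?thesis
  proof (cases V)
    case (NG g) then show ?thesis using d0 by simp
  next
    case (NI x)
    have "mc P (wbd P b w) (NI x) = wbd P b w"
      using ru[OF NI] e2 dwb dlt NI by (intro mc_right_unit[of "mdim P x" P _ _ True]) auto
    then show ?thesis using e1 e2 NI ne by (simp add: mbd_NW_map w_def[symmetric])
  next
    case (NW a)
    have "a \<noteq> []" "wok P (mdim P V) a" using cV NW by auto
    then have "wbd P b (wr a (mdim P V) w) = mc P (wbd P b w) (NW a)"
      using WB_r[OF o ww(1)] ww dlt NW by auto
    moreover have "mbd P b (NW (map (wr a (mdim P V)) ws)) = wbd P b (wr a (mdim P V) w)"
      using ne by (cases b) (simp_all add: w_def last_map hd_map)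
    ultimately show ?thesis using e1 e2 NW by simp
  qed
qed

lemma OS_cat:
  assumes cU: "csh P U" and cV: "csh P V" and d: "mdim P U = mdim P V" "0 < mdim P U"
    and c: "mbd P True U = mbd P False V"
  shows "mbd P b (mc P U V) = (if b then mbd P b V else mbd P b U)"
proof -
  have m: "mc P U V = cat U V" using d by (simp add: mc_def)
  show ?thesis
  proof (cases U)
    case (NG g) then show ?thesis using d by simp
  next
    case (NI x) then show ?thesis using m c by auto
  next
    case (NW a)
    show ?thesis
    proof (cases V)
      case (NG g) then show ?thesis using d by simp
    next
      case (NI z) then show ?thesis using m c NW by auto
    next
      case (NW c')
      have "a \<noteq> []" "c' \<noteq> []" using cU cV NW \<open>U = NW a\<close> by auto
      then show ?thesis using m NW \<open>U = NW a\<close> by auto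
    qed
  qed
qed




fun wfe :: "('g,'x) polygraph_scheme \<Rightarrow> 'g pterm \<Rightarrow> bool" where
  "wfe P (Gen g) = True"
| "wfe P (Idt u) = wfe P u"
| "wfe P (Cmp i u v) = (wfe P u \<and> wfe P v \<and> wfd P i u v \<and>
      mbj P True i (eval P u) = mbj P False i (eval P v))"

definition goodgen :: "('g,'x) polygraph_scheme \<Rightarrow> 'g \<Rightarrow> bool" where
  "goodgen P g \<longleftrightarrow> (0 < gdim P g \<longrightarrow> wfe P (gsrc P g) \<and> wfe P (gtgt P g) \<and>
     (2 \<le> gdim P g \<longrightarrow> (\<forall>b. mbd P b (eval P (gsrc P g)) = mbd P b (eval P (gtgt P g)))))"

definition GBn :: "('g,'x) polygraph_scheme \<Rightarrow> nat \<Rightarrow> bool" where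
  "GBn P n \<longleftrightarrow> (\<forall>g. gdim P g \<le> n \<longrightarrow> goodgen P g)"

lemma mbj_one: "0 < mdim P X \<Longrightarrow> mbj P b (mdim P X - 1) X = mbd P b X"
  by (simp add: mbj_def)

lemma mbj_step: "j < mdim P X \<Longrightarrow> mdim P (mbd P b X) = mdim P X - 1 \<Longrightarrow> mbj P b j X = mbj P b j (mbd P b X)"
proof -
  assume a: "j < mdim P X" "mdim P (mbd P b X) = mdim P X - 1"
  then have "mdim P X - j = Suc (mdim P (mbd P b X) - j)" by simp
  then show ?thesis by (simp add: mbj_def funpow_Suc_right del: funpow.simps)
qed

lemma GL: "mbd P b'' (mbd P b Y) = mbd P b'' (mbd P b'' Y) \<Longrightarrow> 0 < m \<Longrightarrow>
   (mbd P b'' ^^ m) (mbd P b Y) = (mbd P b'' ^^ m) (mbd P b'' Y)"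
proof -
  assume h: "mbd P b'' (mbd P b Y) = mbd P b'' (mbd P b'' Y)" and m: "0 < m"
  then obtain m' where "m = Suc m'" by (cases m) auto
  then show ?thesis using h by (simp add: funpow_Suc_right del: funpow.simps)
qed

lemma GLj: "mbd P b'' (mbd P b Y) = mbd P b'' (mbd P b'' Y) \<Longrightarrow> i < mdim P Y - 1 \<Longrightarrow>
   mdim P (mbd P b Y) = mdim P Y - 1 \<Longrightarrow> mbj P b'' i (mbd P b Y) = mbj P b'' i Y"
proof -
  assume h: "mbd P b'' (mbd P b Y) = mbd P b'' (mbd P b'' Y)" and i: "i < mdim P Y - 1"
    and d: "mdim P (mbd P b Y) = mdim P Y - 1"
  have "mbj P b'' i (mbd P b Y) = (mbd P b'' ^^ (mdim P Y - 1 - i)) (mbd P b Y)"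
    using d by (simp add: mbj_def)
  also have "\<dots> = (mbd P b'' ^^ (mdim P Y - 1 - i)) (mbd P b'' Y)" using GL[OF h] i by simp
  also have "\<dots> = (mbd P b'' ^^ (mdim P Y - i)) Y"
  proof -
    have "mdim P Y - i = Suc (mdim P Y - 1 - i)" using i by simp
    then show ?thesis by (simp add: funpow_Suc_right del: funpow.simps)
  qed
  finally show ?thesis by (simp add: mbj_def)
qed

lemma wbd_wfull: "wbd P b (wfull g m) = eval P (if b then gtgt P g else gsrc P g)"
  by (induction m) (auto simp: lcmw_def rcmw_def)

lemma GBn_mono: "GBn P n \<Longrightarrow> m \<le> n \<Longrightarrow> GBn P m"
  by (auto simp: GBn_def)

lemma BWG:
  assumes o: "omega_polygraph P"
  shows "GBn P (pdim P x) \<Longrightarrow> wfe P x \<Longrightarrow> 0 < pdim P x \<Longrightarrow>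
    (\<forall>b. eval P (pbd P b x) = mbd P b (eval P x) \<and> wfe P (pbd P b x)) \<and>
    (2 \<le> pdim P x \<longrightarrow> (\<forall>b b'. mbd P b' (mbd P b (eval P x)) = mbd P b' (mbd P b' (eval P x))))"
proof (induction x)
  case (Gen g)
  have gg: "goodgen P g" using Gen.prems by (auto simp: GBn_def)
  show ?case using gg Gen.prems by (auto simp: wbd_wfull goodgen_def)
next
  case (Idt u)
  then show ?case by simp
next
  case (Cmp i a c)
  define A where "A = eval P a"
  define C where "C = eval P c"
  have wa: "wfe P a" and wc: "wfe P c" and wd: "wfd P i a c"
    and cond: "mbj P True i A = mbj P False i C" using Cmp.prems by (auto simp: A_def C_def)
  have da0: "0 < pdim P a" and dc0: "0 < pdim P c" and iv: "i = min (pdim P a) (pdim P c) - 1"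
    using wd by (auto simp: wfd_def)
  have ga: "GBn P (pdim P a)" and gc: "GBn P (pdim P c)" using Cmp.prems(1) by (auto intro: GBn_mono)
  note IHa = Cmp.IH(1)[OF ga wa da0] and IHc = Cmp.IH(2)[OF gc wc dc0]
  have cA: "csh P A" and cC: "csh P C" by (simp_all add: A_def C_def csh_eval)
  have mA: "mdim P A = pdim P a" and mC: "mdim P C = pdim P c" by (simp_all add: A_def C_def)
  have ev: "eval P (Cmp i a c) = mc P A C" by (simp add: A_def C_def)
  have dmbA: "\<And>b. mdim P (mbd P b A) = pdim P a - 1"
    using IHa o by (metis A_def mdim_eval pdim_pbd da0)
  have dmbC: "\<And>b. mdim P (mbd P b C) = pdim P c - 1"
    using IHc o by (metis C_def mdim_eval pdim_pbd dc0)
  consider (eq) "pdim P a = pdim P c" | (lt) "pdim P a < pdim P c" | (gt) "pdim P c < pdim P a" by linarith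
  then show ?case
  proof cases
    case eq
    have c1: "mbd P True A = mbd P False C"
      using cond iv eq mbj_one[of P A True] mbj_one[of P C False] mA mC da0 by simp
    have B: "\<And>b. mbd P b (mc P A C) = (if b then mbd P b C else mbd P b A)"
      using OS_cat[OF cA cC _ _ c1] mA mC eq da0 by simp
    have pb: "\<And>b. pbd P b (Cmp i a c) = (if b then pbd P b c else pbd P b a)" using eq by simp
    show ?thesis
    proof (intro conjI allI impI)
      fix b
      show "eval P (pbd P b (Cmp i a c)) = mbd P b (eval P (Cmp i a c))"
        using pb B ev IHa IHc by (simp add: A_def C_def)
      show "wfe P (pbd P b (Cmp i a c))" using pb IHa IHc by simp
    next
      fix b b'
      assume d2: "2 \<le> pdim P (Cmp i a c)"
      have gA: "\<And>b b'. mbd P b' (mbd P b A) = mbd P b' (mbd P b' A)" using IHa d2 eq by (simp add: A_def)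
      have gC: "\<And>b b'. mbd P b' (mbd P b C) = mbd P b' (mbd P b' C)" using IHc d2 eq by (simp add: C_def)
      have k: "mbd P b' (mbd P True C) = mbd P b' (mbd P False A)"
        using gA gC c1 by metis
      show "mbd P b' (mbd P b (eval P (Cmp i a c))) = mbd P b' (mbd P b' (eval P (Cmp i a c)))"
        using ev B k by (cases b; cases b') auto
    qed
  next
    case lt
    have iv': "i = pdim P a - 1" using iv lt by simp
    have pb: "\<And>b. pbd P b (Cmp i a c) = Cmp i a (pbd P b c)" using lt by simp
    have OS: "\<And>b. mbd P b (mc P A C) = mc P A (mbd P b C)"
      using OS_lw[OF o cA cC] mA mC lt da0 by simp
    have gC: "\<And>b b'. mbd P b' (mbd P b C) = mbd P b' (mbd P b' C)" using IHc lt da0 by (simp add: C_def)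
    have W: "\<And>b. wfe P (Cmp i a (pbd P b c))"
    proof -
      fix b
      have d: "pdim P (pbd P b c) = pdim P c - 1" using o dc0 by (simp add: pdim_pbd)
      have "mbj P False i (mbd P b C) = mbj P False i C"
      proof (cases b)
        case True
        then show ?thesis using GLj[of P False True C i] gC dmbC mC iv' lt da0 by simp
      next
        case False
        then show ?thesis using mbj_step[of i P C False] dmbC mC iv' lt by simp
      qed
      then show "wfe P (Cmp i a (pbd P b c))"
        using wa IHc cond d lt iv' da0 by (auto simp: wfd_def C_def A_def)
    qed
    show ?thesis
    proof (intro conjI allI impI)
      fix b
      show "eval P (pbd P b (Cmp i a c)) = mbd P b (eval P (Cmp i a c))"
        using pb OS ev IHc by (simp add: A_def C_def)
      show "wfe P (pbd P b (Cmp i a c))" using pb W by simp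
    next
      fix b b'
      show "mbd P b' (mbd P b (eval P (Cmp i a c))) = mbd P b' (mbd P b' (eval P (Cmp i a c)))"
      proof (cases "pdim P a < pdim P c - 1")
        case True
        have "\<And>b. mbd P b' (mbd P b (mc P A C)) = mc P A (mbd P b' (mbd P b C))"
          using OS OS_lw[OF o cA _ _, of "mbd P _ C"] dmbC mA da0 True
          by (metis C_def csh_eval IHc)
        then show ?thesis using ev gC by metis
      next
        case False
        then have deq: "pdim P a = pdim P c - 1" using lt by simp
        have c1: "\<And>b. mbd P True A = mbd P False (mbd P b C)"
        proof -
          fix b
          have "wfe P (Cmp i a (pbd P b c))" using W .
          then have "mbj P True i A = mbj P False i (mbd P b C)" using IHc by (simp add: A_def C_def)
          then show "mbd P True A = mbd P False (mbd P b C)"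
            using mbj_one[of P A True] mbj_one[of P "mbd P b C" False] mA dmbC iv' deq da0 by simp
        qed
        have k: "\<And>b b'. mbd P b' (mc P A (mbd P b C)) = (if b' then mbd P b' (mbd P b C) else mbd P b' A)"
          using OS_cat[OF cA _ _ _ c1] mA dmbC deq da0 IHc by (metis C_def csh_eval)
        show ?thesis using ev OS k gC by (cases b'; simp)
      qed
    qed
  next
    case gt
    have iv': "i = pdim P c - 1" using iv gt by simp
    have pb: "\<And>b. pbd P b (Cmp i a c) = Cmp i (pbd P b a) c" using gt by simp
    have gA: "\<And>b b'. mbd P b' (mbd P b A) = mbd P b' (mbd P b' A)" using IHa gt dc0 by (simp add: A_def)
    have glob: "\<And>b. mbj P True i (mbd P b A) = mbj P True i A"
    proof -
      fix b
      show "mbj P True i (mbd P b A) = mbj P True i A"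
      proof (cases b)
        case True
        then show ?thesis using mbj_step[of i P A True] dmbA mA iv' gt by simp
      next
        case False
        then show ?thesis using GLj[of P True False A i] gA dmbA mA iv' gt dc0 by simp
      qed
    qed
    have ru: "\<And>b x. C = NI x \<Longrightarrow> x = mbj P True (mdim P x) (mbd P b A)"
    proof -
      fix b x assume Cx: "C = NI x"
      have "mdim P x = i" using Cx mC iv' by simp
      moreover have "mbj P False i C = x" using Cx \<open>mdim P x = i\<close> by (simp add: mbj_NI mbj_triv)
      ultimately show "x = mbj P True (mdim P x) (mbd P b A)" using cond glob by simp
    qed
    have OS: "\<And>b. mbd P b (mc P A C) = mc P (mbd P b A) C"
      using OS_rw[OF o cA cC _ _ ru] mA mC gt dc0 by simp
    have W: "\<And>b. wfe P (Cmp i (pbd P b a) c)"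
    proof -
      fix b
      have d: "pdim P (pbd P b a) = pdim P a - 1" using o da0 by (simp add: pdim_pbd)
      show "wfe P (Cmp i (pbd P b a) c)"
        using wc IHa cond d gt iv' dc0 glob by (auto simp: wfd_def C_def A_def)
    qed
    show ?thesis
    proof (intro conjI allI impI)
      fix b
      show "eval P (pbd P b (Cmp i a c)) = mbd P b (eval P (Cmp i a c))"
        using pb OS ev IHa by (simp add: A_def C_def)
      show "wfe P (pbd P b (Cmp i a c))" using pb W by simp
    next
      fix b b'
      show "mbd P b' (mbd P b (eval P (Cmp i a c))) = mbd P b' (mbd P b' (eval P (Cmp i a c)))"
      proof (cases "pdim P c < pdim P a - 1")
        case True
        show ?thesis
        proof (cases "\<exists>x. C = NI x")
          case True
          then obtain x where Cx: "C = NI x" by blast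
          have mx: "mdim P x = i" using Cx mC iv' by simp
          have xe: "x = mbj P True (mdim P x) A" using ru[OF Cx, of True] glob[of True] mx by simp
          have "mc P A (NI x) = A"
            by (rule mc_right_unit[of "mdim P x" P A x True]) (use mx mA gt iv' xe dc0 in auto)
          then have "mc P A C = A" using Cx by simp
          then show ?thesis using ev gA by simp
        next
          case False
          have ru2: "\<And>b x. C = NI x \<Longrightarrow> x = mbj P True (mdim P x) (mbd P b (mbd P b'' A))" for b''
            using False by blast
          have "\<And>b. mbd P b' (mbd P b (mc P A C)) = mc P (mbd P b' (mbd P b A)) C"
          proof -
            fix b
            have cs: "csh P (mbd P b A)" using IHa csh_eval by (metis A_def)
            have "mbd P b' (mc P (mbd P b A) C) = mc P (mbd P b' (mbd P b A)) C"
              by (rule OS_rw[OF o cs cC]) (use False dmbA mC True dc0 in auto)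
            then show "mbd P b' (mbd P b (mc P A C)) = mc P (mbd P b' (mbd P b A)) C" using OS by simp
          qed
          then show ?thesis using ev gA by metis
        qed
      next
        case False
        then have deq: "pdim P c = pdim P a - 1" using gt by simp
        have c1: "\<And>b. mbd P True (mbd P b A) = mbd P False C"
        proof -
          fix b
          have "wfe P (Cmp i (pbd P b a) c)" using W .
          then have "mbj P True i (mbd P b A) = mbj P False i C" using IHa by (simp add: A_def C_def)
          then show "mbd P True (mbd P b A) = mbd P False C"
            using mbj_one[of P "mbd P b A" True] mbj_one[of P C False] mC dmbA iv' deq dc0 by simp
        qed
        have k: "\<And>b b'. mbd P b' (mc P (mbd P b A) C) = (if b' then mbd P b' C else mbd P b' (mbd P b A))"
          using OS_cat[OF _ cC _ _ c1] mC dmbA deq dc0 IHa by (metis A_def csh_eval)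
        show ?thesis using ev OS k gA by (cases b'; simp)
      qed
    qed
  qed
qed




lemma Bit:
  assumes o: "omega_polygraph P"
  shows "GBn P (pdim P x) \<Longrightarrow> wfe P x \<Longrightarrow> n \<le> pdim P x \<Longrightarrow>
    eval P ((pbd P b ^^ n) x) = (mbd P b ^^ n) (eval P x) \<and> wfe P ((pbd P b ^^ n) x)"
proof (induction n)
  case 0 then show ?case by simp
next
  case (Suc n)
  define y where "y = (pbd P b ^^ n) x"
  have IH: "eval P y = (mbd P b ^^ n) (eval P x)" "wfe P y" using Suc by (auto simp: y_def)
  have dy: "pdim P y = pdim P x - n" using pdim_pbd_pow[OF o] Suc.prems by (simp add: y_def)
  have g: "GBn P (pdim P y)" using Suc.prems dy by (auto intro: GBn_mono)
  have "eval P (pbd P b y) = mbd P b (eval P y) \<and> wfe P (pbd P b y)"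
    using BWG[OF o g IH(2)] dy Suc.prems by auto
  then show ?case using IH by (simp add: y_def)
qed

lemma Bj:
  assumes o: "omega_polygraph P" and g: "GBn P (pdim P x)" and w: "wfe P x"
  shows "eval P (bdj P b j x) = mbj P b j (eval P x)" "wfe P (bdj P b j x)"
  using Bit[OF o g w, of "pdim P x - j" b] by (auto simp: bdj_def mbj_def)

lemma Gstar:
  assumes o: "omega_polygraph P"
  shows "GBn P (pdim P x) \<Longrightarrow> wfe P x \<Longrightarrow> i + n < pdim P x \<Longrightarrow>
    mbj P b' i ((mbd P b ^^ n) (eval P x)) = mbj P b' i (eval P x)"
proof (induction n arbitrary: x)
  case 0 then show ?case by simp
next
  case (Suc n)
  have d0: "0 < pdim P x" using Suc.prems by simp
  have B1: "eval P (pbd P b x) = mbd P b (eval P x)" "wfe P (pbd P b x)"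
    using BWG[OF o Suc.prems(1,2) d0] by auto
  have dp: "pdim P (pbd P b x) = pdim P x - 1" using o d0 by (simp add: pdim_pbd)
  have g: "GBn P (pdim P (pbd P b x))" using Suc.prems(1) dp by (auto intro: GBn_mono)
  have "(mbd P b ^^ Suc n) (eval P x) = (mbd P b ^^ n) (eval P (pbd P b x))"
    using B1 by (simp add: funpow_Suc_right del: funpow.simps)
  then have "mbj P b' i ((mbd P b ^^ Suc n) (eval P x)) = mbj P b' i (eval P (pbd P b x))"
    using Suc.IH[OF g B1(2)] Suc.prems dp by simp
  also have "\<dots> = mbj P b' i (eval P x)"
  proof -
    have G1: "mbd P b' (mbd P b (eval P x)) = mbd P b' (mbd P b' (eval P x))"
      using BWG[OF o Suc.prems(1,2) d0] Suc.prems by auto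
    have "mdim P (mbd P b (eval P x)) = pdim P x - 1" using B1(1) dp by (metis mdim_eval)
    then show ?thesis using GLj[OF G1, of i] B1 dp Suc.prems by simp
  qed
  finally show ?case .
qed

lemma Gj:
  assumes o: "omega_polygraph P" and g: "GBn P (pdim P x)" and w: "wfe P x" and ij: "i < j"
  shows "mbj P b' i (mbj P b j (eval P x)) = mbj P b' i (eval P x)"
proof (cases "j < pdim P x")
  case True
  then show ?thesis using Gstar[OF o g w, of i "pdim P x - j" b' b] ij by (simp add: mbj_def[of P b j])
next
  case False
  then show ?thesis by (simp add: mbj_triv)
qed




lemma assoc_dims: "0 < (a::nat) \<Longrightarrow> 0 < b \<Longrightarrow> 0 < c \<Longrightarrow> i = min a b - 1 \<Longrightarrow> i = min (max a b) c - 1 \<Longrightarrow>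
  i = min b c - 1 \<Longrightarrow> i = min a (max b c) - 1 \<Longrightarrow> (b \<le> a \<and> b \<le> c \<and> \<not> (b < a \<and> b < c)) \<or> (a = c \<and> a < b)"
  by (simp add: min_def max_def split: if_splits; linarith)

lemma dist_dims: "0 < (a::nat) \<Longrightarrow> 0 < b \<Longrightarrow> 0 < c \<Longrightarrow> i = min a b - 1 \<Longrightarrow> i = min a c - 1 \<Longrightarrow>
  j = min b c - 1 \<Longrightarrow> i < j \<Longrightarrow> a < b \<and> a < c"
  by (simp add: min_def max_def split: if_splits; linarith)

fun hw0 :: "('g,'x) polygraph_scheme \<Rightarrow> 'g pterm \<Rightarrow> bool" where
  "hw0 P (Gen g) = True"
| "hw0 P (Idt u) = (hw0 P u \<and> pcell P u)"
| "hw0 P (Cmp i u v) = (hw0 P u \<and> hw0 P v \<and> pcell P u \<and> pcell P v \<and> wfd P i u v)"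

lemma pceq_refl1: "pceq P x y \<Longrightarrow> pcell P x"
  unfolding pcell_def by (meson pceq.sym pceq.trans)
lemma pceq_refl2: "pceq P x y \<Longrightarrow> pcell P y"
  unfolding pcell_def by (meson pceq.sym pceq.trans)

lemma HER0:
  assumes o: "omega_polygraph P"
  shows "pceq P x y \<Longrightarrow> hw0 P x \<and> hw0 P y \<and> pdim P x = pdim P y"
proof (induction rule: pceq.induct)
  case (gen g) then show ?case by simp
next
  case (idt u u') then show ?case using pceq_refl1 pceq_refl2 by auto
next
  case (cmp u u' v v' i)
  then show ?case using pceq_refl1 pceq_refl2 by (auto simp: wfd_def)
next
  case (sym x y) then show ?case by auto
next
  case (trans x y z) then show ?case by auto
next
  case (unit_l u i)
  have "pdim P (psrc P i u) = i" using unit_l.hyps o by (simp add: psrc_bdj pdim_bdj)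
  then show ?case using unit_l by auto
next
  case (unit_r u i)
  have "pdim P (ptgt P i u) = i" using unit_r.hyps o by (simp add: ptgt_bdj pdim_bdj)
  then show ?case using unit_r by auto
next
  case (assoc i u v w)
  then show ?case by (simp add: max.assoc)
next
  case (dist_l i j u v w)
  then show ?case by (simp add: max_def)
next
  case (dist_r i j v w u)
  then show ?case by (simp add: max_def)
next
  case (id_l i u v)
  then have "pdim P u \<le> pdim P v" by (simp add: wfd_def min_def split: if_splits; linarith)
  then show ?case using id_l by auto
next
  case (id_r i v u)
  then have "pdim P u \<le> pdim P v" by (simp add: wfd_def min_def split: if_splits; linarith)
  then show ?case using id_r by auto
qed




lemma wfe_CmpD: "wfe P (Cmp i u v) \<Longrightarrow> wfe P u \<and> wfe P v \<and> wfd P i u v"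
  by simp
lemma max3_dist: "max (a::nat) (max b c) = max (max a b) (max a c)"
  by (simp add: max_def)
lemma max3_assoc: "max (max (a::nat) b) c = max a (max b c)"
  by (simp add: max_def)

lemma max3_dist_r: "max (max (b::nat) c) a = max (max b a) (max c a)"
  by (simp add: max_def)

lemma Sound:
  assumes o: "omega_polygraph P"
  shows "pceq P x y \<Longrightarrow> GBn P n \<Longrightarrow> pdim P x \<le> n \<or> pdim P y \<le> n \<Longrightarrow>
    eval P x = eval P y \<and> wfe P x \<and> wfe P y"
proof (induction rule: pceq.induct)
  case (gen g) then show ?case by simp
next
  case (idt u u')
  have "pdim P u \<le> n \<or> pdim P u' \<le> n" using idt.prems by auto
  then show ?case using idt.IH idt.prems by simp
next
  case (cmp u u' v v' i)
  have hu: "pdim P u \<le> n \<or> pdim P u' \<le> n" and hv: "pdim P v \<le> n \<or> pdim P v' \<le> n"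
    using cmp.prems(2) by auto
  have Iu: "eval P u = eval P u'" "wfe P u" "wfe P u'" using cmp.IH(1)[OF cmp.prems(1) hu] by auto
  have Iv: "eval P v = eval P v'" "wfe P v" "wfe P v'" using cmp.IH(2)[OF cmp.prems(1) hv] by auto
  have du: "pdim P u = pdim P u'" using Iu(1) mdim_eval by metis
  have dv: "pdim P v = pdim P v'" using Iv(1) mdim_eval by metis
  have un: "pdim P u \<le> n" "pdim P v \<le> n" using cmp.prems(2) du dv by auto
  have "pdim P (ptgt P i u) \<le> n" using un o by (simp add: ptgt_bdj pdim_bdj)
  then have I3: "eval P (ptgt P i u) = eval P (psrc P i v)" using cmp.IH(3)[OF cmp.prems(1)] by auto
  have gu: "GBn P (pdim P u)" "GBn P (pdim P v)" using cmp.prems(1) un by (auto intro: GBn_mono)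
  have c: "mbj P True i (eval P u) = mbj P False i (eval P v)"
    using I3 Bj(1)[OF o gu(1) Iu(2), of True i] Bj(1)[OF o gu(2) Iv(2), of False i]
    by (simp add: ptgt_bdj psrc_bdj)
  have w1: "wfe P (Cmp i u v)" using c Iu Iv cmp.hyps by (simp add: wfd_def)
  have w2: "wfe P (Cmp i u' v')" using c Iu Iv du dv cmp.hyps by (simp add: wfd_def)
  have "eval P (Cmp i u v) = eval P (Cmp i u' v')" using Iu Iv by simp
  then show ?case using w1 w2 by blast
next
  case (sym x y) then show ?case by auto
next
  case (trans x y z)
  show ?case
  proof (cases "pdim P x \<le> n")
    case True
    then have I1: "eval P x = eval P y" "wfe P x" "wfe P y" using trans.IH(1)[OF trans.prems(1)] by auto
    then have "pdim P y \<le> n" using True mdim_eval by metis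
    then show ?thesis using trans.IH(2)[OF trans.prems(1)] I1 by auto
  next
    case False
    then have z: "pdim P z \<le> n" using trans.prems by auto
    then have I2: "eval P y = eval P z" "wfe P y" "wfe P z" using trans.IH(2)[OF trans.prems(1)] by auto
    then have "pdim P y \<le> n" using z mdim_eval by metis
    then show ?thesis using trans.IH(1)[OF trans.prems(1)] I2 by auto
  qed
next
  case (unit_l u i)
  have ds: "pdim P (psrc P i u) = i" using unit_l.hyps o by (simp add: psrc_bdj pdim_bdj)
  have dC: "pdim P (Cmp i (Idt (psrc P i u)) u) = pdim P u" using ds unit_l.hyps by simp
  have un: "pdim P u \<le> n" using unit_l.prems dC by auto
  have I1: "wfe P u" using unit_l.IH(1)[OF unit_l.prems(1)] un by auto
  have I2: "wfe P (Cmp i (Idt (psrc P i u)) u)" using unit_l.IH(2)[OF unit_l.prems(1)] un dC by auto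
  have "mc P (NI (eval P (psrc P i u))) (eval P u) = eval P u"
    using ds unit_l.hyps by (intro mc_NI_left) simp
  then have "eval P (Cmp i (Idt (psrc P i u)) u) = eval P u" by simp
  then show ?case using I1 I2 by blast
next
  case (unit_r u i)
  have ds: "pdim P (ptgt P i u) = i" using unit_r.hyps o by (simp add: ptgt_bdj pdim_bdj)
  have dC: "pdim P (Cmp i u (Idt (ptgt P i u))) = pdim P u" using ds unit_r.hyps by simp
  have un: "pdim P u \<le> n" using unit_r.prems dC by auto
  have I1: "wfe P u" using unit_r.IH(1)[OF unit_r.prems(1)] un by auto
  have I2: "wfe P (Cmp i u (Idt (ptgt P i u)))" using unit_r.IH(2)[OF unit_r.prems(1)] un dC by auto
  have gu: "GBn P (pdim P u)" using unit_r.prems(1) un by (auto intro: GBn_mono)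
  have Z: "eval P (ptgt P i u) = mbj P True i (eval P u)" using Bj(1)[OF o gu I1] by (simp add: ptgt_bdj)
  have "mc P (eval P u) (NI (eval P (ptgt P i u))) = eval P u"
    using ds unit_r.hyps Z by (intro mc_right_unit[of i P _ _ True]) (auto simp flip: Z)
  then have "eval P (Cmp i u (Idt (ptgt P i u))) = eval P u" by simp
  then show ?case using I1 I2 by blast
next
  case (assoc i u v w)
  have "pdim P (Cmp i (Cmp i u v) w) = pdim P (Cmp i u (Cmp i v w))" by (simp only: pdim.simps max3_assoc)
  then have h: "pdim P (Cmp i (Cmp i u v) w) \<le> n" "pdim P (Cmp i u (Cmp i v w)) \<le> n"
    using assoc.prems by auto
  have I1: "wfe P (Cmp i (Cmp i u v) w)" using assoc.IH(1)[OF assoc.prems(1)] h by auto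
  have I2: "wfe P (Cmp i u (Cmp i v w))" using assoc.IH(2)[OF assoc.prems(1)] h by auto
  have d: "0 < pdim P u" "0 < pdim P v" "0 < pdim P w" "i = min (pdim P u) (pdim P v) - 1"
    "i = min (max (pdim P u) (pdim P v)) (pdim P w) - 1" "i = min (pdim P v) (pdim P w) - 1"
    "i = min (pdim P u) (max (pdim P v) (pdim P w)) - 1"
    using wfe_CmpD[OF I1] wfe_CmpD[OF I2] by (simp_all add: wfd_def)
  have "mc P (mc P (eval P u) (eval P v)) (eval P w) = mc P (eval P u) (mc P (eval P v) (eval P w))"
    by (rule mc_assoc) (use d assoc_dims[OF d] in simp_all)
  then have "eval P (Cmp i (Cmp i u v) w) = eval P (Cmp i u (Cmp i v w))" by simp
  then show ?case using I1 I2 by blast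
next
  case (dist_l i j u v w)
  have "pdim P (Cmp i u (Cmp j v w)) = pdim P (Cmp j (Cmp i u v) (Cmp i u w))" unfolding pdim.simps by (rule max3_dist)
  then have h: "pdim P (Cmp i u (Cmp j v w)) \<le> n" "pdim P (Cmp j (Cmp i u v) (Cmp i u w)) \<le> n"
    using dist_l.prems by auto
  have I1: "wfe P (Cmp i u (Cmp j v w))" using dist_l.IH(1)[OF dist_l.prems(1)] h by auto
  have I2: "wfe P (Cmp j (Cmp i u v) (Cmp i u w))" using dist_l.IH(2)[OF dist_l.prems(1)] h by auto
  have w: "wfd P i u v" "wfd P i u w" "wfd P j v w"
    using conjunct2[OF conjunct2[OF wfe_CmpD[OF conjunct1[OF wfe_CmpD[OF I2]]]]]
      conjunct2[OF conjunct2[OF wfe_CmpD[OF conjunct1[OF conjunct2[OF wfe_CmpD[OF I2]]]]]]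
      conjunct2[OF conjunct2[OF wfe_CmpD[OF conjunct1[OF conjunct2[OF wfe_CmpD[OF I1]]]]]] .
  have d: "0 < pdim P u" "0 < pdim P v" "0 < pdim P w" "i = min (pdim P u) (pdim P v) - 1"
      "i = min (pdim P u) (pdim P w) - 1" "j = min (pdim P v) (pdim P w) - 1" "i < j"
    using w dist_l.hyps unfolding wfd_def by simp_all
  have "mc P (eval P u) (mc P (eval P v) (eval P w)) = mc P (mc P (eval P u) (eval P v)) (mc P (eval P u) (eval P w))"
    by (rule mc_dist_l) (use dist_dims[OF d] in simp_all)
  then have "eval P (Cmp i u (Cmp j v w)) = eval P (Cmp j (Cmp i u v) (Cmp i u w))" by simp
  then show ?case using I1 I2 by blast
next
  case (dist_r i j v w u)
  have "pdim P (Cmp i (Cmp j v w) u) = pdim P (Cmp j (Cmp i v u) (Cmp i w u))" unfolding pdim.simps by (rule max3_dist_r)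
  then have h: "pdim P (Cmp i (Cmp j v w) u) \<le> n" "pdim P (Cmp j (Cmp i v u) (Cmp i w u)) \<le> n"
    using dist_r.prems by auto
  have I1: "wfe P (Cmp i (Cmp j v w) u)" using dist_r.IH(1)[OF dist_r.prems(1)] h by auto
  have I2: "wfe P (Cmp j (Cmp i v u) (Cmp i w u))" using dist_r.IH(2)[OF dist_r.prems(1)] h by auto
  have w: "wfd P i v u" "wfd P i w u" "wfd P j v w"
    using conjunct2[OF conjunct2[OF wfe_CmpD[OF conjunct1[OF wfe_CmpD[OF I2]]]]]
      conjunct2[OF conjunct2[OF wfe_CmpD[OF conjunct1[OF conjunct2[OF wfe_CmpD[OF I2]]]]]]
      conjunct2[OF conjunct2[OF wfe_CmpD[OF conjunct1[OF wfe_CmpD[OF I1]]]]] .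
  have d: "0 < pdim P u" "0 < pdim P v" "0 < pdim P w" "i = min (pdim P u) (pdim P v) - 1"
      "i = min (pdim P u) (pdim P w) - 1" "j = min (pdim P v) (pdim P w) - 1" "i < j"
    using w dist_r.hyps unfolding wfd_def by (simp_all add: min.commute)
  have "mc P (mc P (eval P v) (eval P w)) (eval P u) = mc P (mc P (eval P v) (eval P u)) (mc P (eval P w) (eval P u))"
    by (rule mc_dist_r) (use dist_dims[OF d] in simp_all)
  then have "eval P (Cmp i (Cmp j v w) u) = eval P (Cmp j (Cmp i v u) (Cmp i w u))" by simp
  then show ?case using I1 I2 by blast
next
  case (id_l i u v)
  have hh: "hw0 P (Cmp i u (Idt v))" "hw0 P (Idt (Cmp i u v))"
    using HER0[OF o id_l.hyps(1)] HER0[OF o id_l.hyps(2)] by auto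
  then have le: "pdim P u \<le> pdim P v" by (simp add: wfd_def min_def split: if_splits; linarith)
  then have h: "pdim P (Cmp i u (Idt v)) \<le> n" "pdim P (Idt (Cmp i u v)) \<le> n" using id_l.prems by auto
  have I1: "wfe P (Cmp i u (Idt v))" using id_l.IH(1)[OF id_l.prems(1)] h by auto
  have I2: "wfe P (Idt (Cmp i u v))" using id_l.IH(2)[OF id_l.prems(1)] h by auto
  have "mc P (eval P u) (NI (eval P v)) = NI (mc P (eval P u) (eval P v))"
    using le by (intro mc_NI_right_lw) simp
  then have "eval P (Cmp i u (Idt v)) = eval P (Idt (Cmp i u v))" by simp
  then show ?case using I1 I2 by blast
next
  case (id_r i v u)
  have hh: "hw0 P (Cmp i (Idt v) u)" "hw0 P (Idt (Cmp i v u))"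
    using HER0[OF o id_r.hyps(1)] HER0[OF o id_r.hyps(2)] by auto
  then have le: "pdim P u \<le> pdim P v" by (simp add: wfd_def min_def split: if_splits; linarith)
  then have h: "pdim P (Cmp i (Idt v) u) \<le> n" "pdim P (Idt (Cmp i v u)) \<le> n" using id_r.prems by auto
  have I1: "wfe P (Cmp i (Idt v) u)" using id_r.IH(1)[OF id_r.prems(1)] h by auto
  have I2: "wfe P (Idt (Cmp i v u))" using id_r.IH(2)[OF id_r.prems(1)] h by auto
  have "mc P (NI (eval P v)) (eval P u) = NI (mc P (eval P v) (eval P u))"
    using le by (intro mc_NI_left_rw) simp
  then have "eval P (Cmp i (Idt v) u) = eval P (Idt (Cmp i v u))" by simp
  then show ?case using I1 I2 by blast
qed




lemma GB_all:
  assumes o: "omega_polygraph P"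
  shows "GBn P n"
proof (induction n)
  case 0 then show ?case by (auto simp: GBn_def goodgen_def)
next
  case (Suc n)
  show ?case unfolding GBn_def
  proof (intro allI impI)
    fix g assume gd: "gdim P g \<le> Suc n"
    show "goodgen P g"
    proof (cases "gdim P g \<le> n")
      case True then show ?thesis using Suc.IH by (auto simp: GBn_def)
    next
      case False
      then have ge: "gdim P g = Suc n" using gd by simp
      have pc: "pcell P (gsrc P g)" "pcell P (gtgt P g)" using o ge by (auto simp: omega_dims)
      have ds: "pdim P (gsrc P g) = n" "pdim P (gtgt P g) = n" using o ge by (auto simp: omega_dims)
      have ws: "wfe P (gsrc P g)" "wfe P (gtgt P g)"
        using Sound[OF o pc(1)[unfolded pcell_def] Suc.IH] Sound[OF o pc(2)[unfolded pcell_def] Suc.IH] ds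
        by auto
      have gl: "2 \<le> gdim P g \<Longrightarrow> mbd P b (eval P (gsrc P g)) = mbd P b (eval P (gtgt P g))" for b
      proof -
        assume g2: "2 \<le> gdim P g"
        have pq: "pceq P (bdj P b (gdim P g - 2) (gsrc P g)) (bdj P b (gdim P g - 2) (gtgt P g))"
          using o g2 by (cases b) (auto simp: omega_polygraph_def psrc_bdj ptgt_bdj)
        have "pdim P (bdj P b (gdim P g - 2) (gsrc P g)) \<le> n" using o ds ge by (simp add: pdim_bdj)
        then have "eval P (bdj P b (gdim P g - 2) (gsrc P g)) = eval P (bdj P b (gdim P g - 2) (gtgt P g))"
          using Sound[OF o pq Suc.IH] by auto
        moreover have "GBn P (pdim P (gsrc P g))" "GBn P (pdim P (gtgt P g))" using Suc.IH ds by auto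
        ultimately have "mbj P b (gdim P g - 2) (eval P (gsrc P g)) = mbj P b (gdim P g - 2) (eval P (gtgt P g))"
          using Bj(1)[OF o _ ws(1)] Bj(1)[OF o _ ws(2)] by metis
        moreover have "mbj P b (gdim P g - 2) (eval P (gsrc P g)) = mbd P b (eval P (gsrc P g))"
          using mbj_one[of P "eval P (gsrc P g)" b] ds ge g2 by simp
        moreover have "mbj P b (gdim P g - 2) (eval P (gtgt P g)) = mbd P b (eval P (gtgt P g))"
          using mbj_one[of P "eval P (gtgt P g)" b] ds ge g2 by simp
        ultimately show ?thesis by simp
      qed
      show ?thesis using ws gl by (auto simp: goodgen_def)
    qed
  qed
qed

lemma Sound_all:
  assumes o: "omega_polygraph P" and p: "pceq P x y"
  shows "eval P x = eval P y" "wfe P x" "wfe P y"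
  using Sound[OF o p GB_all[OF o, of "pdim P x"]] by auto

lemma Bj_all:
  assumes o: "omega_polygraph P" and w: "wfe P x"
  shows "eval P (bdj P b j x) = mbj P b j (eval P x)" "wfe P (bdj P b j x)"
  using Bj[OF o GB_all[OF o] w] by auto

lemma Gj_all:
  assumes o: "omega_polygraph P" and w: "wfe P x" and ij: "i < j"
  shows "mbj P b' i (mbj P b j (eval P x)) = mbj P b' i (eval P x)"
  using Gj[OF o GB_all[OF o] w ij] .




definition Faith :: "('g,'x) polygraph_scheme \<Rightarrow> nat \<Rightarrow> bool" where
  "Faith P m \<longleftrightarrow> (\<forall>x y. pcell P x \<longrightarrow> pcell P y \<longrightarrow> pdim P x \<le> m \<longrightarrow> eval P x = eval P y \<longrightarrow> pceq P x y)"

definition FB :: "('g,'x) polygraph_scheme \<Rightarrow> nat \<Rightarrow> bool" where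
  "FB P N \<longleftrightarrow> (\<forall>m<N. Faith P m)"

lemma FB_mono: "FB P N \<Longrightarrow> M \<le> N \<Longrightarrow> FB P M"
  by (auto simp: FB_def)

lemma pcell_CmpD:
  assumes o: "omega_polygraph P" and p: "pcell P (Cmp i X Y)"
  shows "pcell P X" "pcell P Y" "wfd P i X Y"
  using HER0[OF o p[unfolded pcell_def]] by auto

lemma pcell_IdtD:
  assumes o: "omega_polygraph P" and p: "pcell P (Idt X)"
  shows "pcell P X"
  using HER0[OF o p[unfolded pcell_def]] by auto

lemma pcell_wfe: "omega_polygraph P \<Longrightarrow> pcell P x \<Longrightarrow> wfe P x"
  unfolding pcell_def using Sound_all by blast

lemma bdj_Cmp_low:
  assumes o: "omega_polygraph P" and w: "wfd P i u v" and j: "j < min (pdim P u) (pdim P v)"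
  shows "bdj P b j (Cmp i u v) = (if b then bdj P b j v else bdj P b j u)"
proof -
  have h: "\<not> max (pdim P u) (pdim P v) \<le> j" "\<not> min (pdim P u) (pdim P v) \<le> j" using j by auto
  show ?thesis by (subst bdj_Cmp[OF o w]) (simp only: h if_False)
qed

lemma bdj_Cmp_mid:
  assumes o: "omega_polygraph P" and w: "wfd P i u v" and j1: "min (pdim P u) (pdim P v) \<le> j"
    and j2: "j < max (pdim P u) (pdim P v)"
  shows "bdj P b j (Cmp i u v) = Cmp i (bdj P b j u) (bdj P b j v)"
proof -
  have h: "\<not> max (pdim P u) (pdim P v) \<le> j" using j2 by auto
  show ?thesis by (subst bdj_Cmp[OF o w]) (simp only: h j1 if_False if_True)
qed

lemma WP:
  assumes o: "omega_polygraph P"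
  shows "FB P M \<Longrightarrow> wfe P y \<Longrightarrow> pdim P y \<le> M \<Longrightarrow> pcell P y"
proof (induction M arbitrary: y rule: less_induct)
  case (less M)
  have "wfe P y \<Longrightarrow> pdim P y \<le> M \<Longrightarrow> pcell P y" for y
  proof (induction y)
    case (Gen g) then show ?case by (simp add: pcell_def pceq.gen)
  next
    case (Idt u) then show ?case by (simp add: pcell_def pceq.idt)
  next
    case (Cmp i u v)
    have wu: "wfe P u" and wv: "wfe P v" and wd: "wfd P i u v"
      and c: "mbj P True i (eval P u) = mbj P False i (eval P v)" using Cmp.prems by auto
    have pu: "pcell P u" "pcell P v" using Cmp by auto
    have iM: "i < M" using wd Cmp.prems(2) by (auto simp: wfd_def)
    have fb: "FB P i" using less.prems(1) iM by (auto intro: FB_mono)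
    have w1: "wfe P (ptgt P i u)" "wfe P (psrc P i v)" using Bj_all(2)[OF o] wu wv by (auto simp: ptgt_bdj psrc_bdj)
    have d1: "pdim P (ptgt P i u) \<le> i" "pdim P (psrc P i v) \<le> i" using o by (auto simp: ptgt_bdj psrc_bdj pdim_bdj)
    have p1: "pcell P (ptgt P i u)" "pcell P (psrc P i v)" using less.IH[OF iM fb] w1 d1 by auto
    have e: "eval P (ptgt P i u) = eval P (psrc P i v)" using Bj_all(1)[OF o] wu wv c by (simp add: ptgt_bdj psrc_bdj)
    have "Faith P i" using less.prems(1) iM by (auto simp: FB_def)
    then have "pceq P (ptgt P i u) (psrc P i v)" using p1 d1 e by (auto simp: Faith_def)
    then show ?case using pu wd unfolding pcell_def wfd_def by (auto intro: pceq.cmp)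
  qed
  then show ?case using less.prems by blast
qed

lemma INV:
  assumes o: "omega_polygraph P" and fb: "FB P N" and p: "pcell P (Cmp i X Y)" and d: "pdim P (Cmp i X Y) \<le> N"
  shows "pceq P (ptgt P i X) (psrc P i Y)"
proof -
  have w: "wfe P (Cmp i X Y)" using pcell_wfe[OF o p] .
  then have wu: "wfe P X" and wv: "wfe P Y" and wd: "wfd P i X Y"
      and c: "mbj P True i (eval P X) = mbj P False i (eval P Y)" by auto
  have iM: "i < N" using wd d by (auto simp: wfd_def)
  have fbi: "FB P i" using fb iM by (auto intro: FB_mono)
  have w1: "wfe P (ptgt P i X)" "wfe P (psrc P i Y)" using Bj_all(2)[OF o] wu wv by (auto simp: ptgt_bdj psrc_bdj)
  have d1: "pdim P (ptgt P i X) \<le> i" "pdim P (psrc P i Y) \<le> i" using o by (auto simp: ptgt_bdj psrc_bdj pdim_bdj)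
  have p1: "pcell P (ptgt P i X)" "pcell P (psrc P i Y)" using WP[OF o fbi] w1 d1 by auto
  have e: "eval P (ptgt P i X) = eval P (psrc P i Y)" using Bj_all(1)[OF o] wu wv c by (simp add: ptgt_bdj psrc_bdj)
  have "Faith P i" using fb iM by (auto simp: FB_def)
  then show ?thesis using p1 d1 e by (auto simp: Faith_def)
qed

lemma R_cong:
  assumes o: "omega_polygraph P" and fb: "FB P N" and p: "pcell P (Cmp i X Y)" and d: "pdim P (Cmp i X Y) \<le> N"
    and x: "pceq P X X'" and y: "pceq P Y Y'"
  shows "pceq P (Cmp i X Y) (Cmp i X' Y')"
  using pcell_CmpD(3)[OF o p] INV[OF o fb p d] x y unfolding wfd_def by (auto intro: pceq.cmp)

lemma R_unitl:
  assumes o: "omega_polygraph P" and fb: "FB P N" and p: "pcell P (Cmp i (Idt z) u)"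
    and d: "pdim P (Cmp i (Idt z) u) \<le> N" and dz: "pdim P z = i"
  shows "pceq P (Cmp i (Idt z) u) u"
proof -
  have i1: "pceq P (ptgt P i (Idt z)) (psrc P i u)" using INV[OF o fb p d] .
  have "ptgt P i (Idt z) = z" using dz by (simp add: ptgt_def)
  then have zz: "pceq P z (psrc P i u)" using i1 by simp
  have pu: "pcell P u" and wd: "wfd P i (Idt z) u" using pcell_CmpD[OF o p] by auto
  have iu: "i < pdim P u" using wd dz by (auto simp: wfd_def)
  have e1: "pceq P (Cmp i (Idt z) u) (Cmp i (Idt (psrc P i u)) u)"
    using R_cong[OF o fb p d] zz pu by (auto simp: pcell_def intro: pceq.idt)
  have "pceq P (Cmp i (Idt (psrc P i u)) u) u"
    using pu iu pceq_refl2[OF e1] by (auto simp: pcell_def intro: pceq.unit_l)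
  then show ?thesis using e1 by (rule pceq.trans[rotated])
qed

lemma R_unitr:
  assumes o: "omega_polygraph P" and fb: "FB P N" and p: "pcell P (Cmp i u (Idt z))"
    and d: "pdim P (Cmp i u (Idt z)) \<le> N" and dz: "pdim P z = i"
  shows "pceq P (Cmp i u (Idt z)) u"
proof -
  have i1: "pceq P (ptgt P i u) (psrc P i (Idt z))" using INV[OF o fb p d] .
  have "psrc P i (Idt z) = z" using dz by (simp add: psrc_def)
  then have zz: "pceq P z (ptgt P i u)" using i1 by (simp add: pceq.sym)
  have pu: "pcell P u" and wd: "wfd P i u (Idt z)" using pcell_CmpD[OF o p] by auto
  have iu: "i < pdim P u" using wd dz by (auto simp: wfd_def)
  have e1: "pceq P (Cmp i u (Idt z)) (Cmp i u (Idt (ptgt P i u)))"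
    using R_cong[OF o fb p d] zz pu by (auto simp: pcell_def intro: pceq.idt)
  have "pceq P (Cmp i u (Idt (ptgt P i u))) u"
    using pu iu pceq_refl2[OF e1] by (auto simp: pcell_def intro: pceq.unit_r)
  then show ?thesis using e1 by (rule pceq.trans[rotated])
qed

lemma R_idl:
  assumes o: "omega_polygraph P" and fb: "FB P N" and p: "pcell P (Cmp i u (Idt v))"
    and d: "pdim P (Cmp i u (Idt v)) \<le> N" and le: "pdim P u \<le> pdim P v"
  shows "pceq P (Cmp i u (Idt v)) (Idt (Cmp i u v))"
proof -
  have w: "wfe P (Cmp i u (Idt v))" using pcell_wfe[OF o p] .
  then have wu: "wfe P u" and wv: "wfe P v" and wd: "wfd P i u (Idt v)"
    and c: "mbj P True i (eval P u) = mbj P False i (NI (eval P v))" by auto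
  have wd2: "wfd P i u v" using wd le by (auto simp: wfd_def)
  have "i \<le> mdim P (eval P v)" using wd2 le by (auto simp: wfd_def)
  then have c2: "mbj P True i (eval P u) = mbj P False i (eval P v)" using c by (simp add: mbj_NI)
  have "wfe P (Idt (Cmp i u v))" using wu wv wd2 c2 by simp
  moreover have "pdim P (Idt (Cmp i u v)) \<le> N" using d le by simp
  ultimately have "pcell P (Idt (Cmp i u v))" using WP[OF o fb] by blast
  then show ?thesis using p by (auto simp: pcell_def intro: pceq.id_l)
qed

lemma R_idr:
  assumes o: "omega_polygraph P" and fb: "FB P N" and p: "pcell P (Cmp i (Idt v) u)"
    and d: "pdim P (Cmp i (Idt v) u) \<le> N" and le: "pdim P u \<le> pdim P v"
  shows "pceq P (Cmp i (Idt v) u) (Idt (Cmp i v u))"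
proof -
  have w: "wfe P (Cmp i (Idt v) u)" using pcell_wfe[OF o p] .
  then have wu: "wfe P u" and wv: "wfe P v" and wd: "wfd P i (Idt v) u"
    and c: "mbj P True i (NI (eval P v)) = mbj P False i (eval P u)" by auto
  have wd2: "wfd P i v u" using wd le by (auto simp: wfd_def)
  have "i \<le> mdim P (eval P v)" using wd2 le by (auto simp: wfd_def)
  then have c2: "mbj P True i (eval P v) = mbj P False i (eval P u)" using c by (simp add: mbj_NI)
  have "wfe P (Idt (Cmp i v u))" using wu wv wd2 c2 by simp
  moreover have "pdim P (Idt (Cmp i v u)) \<le> N" using d le by simp
  ultimately have "pcell P (Idt (Cmp i v u))" using WP[OF o fb] by blast
  then show ?thesis using p by (auto simp: pcell_def intro: pceq.id_r)
qed

lemma ar_assoc1: "0 < (a::nat) \<Longrightarrow> 0 < b \<Longrightarrow> 0 < c \<Longrightarrow> i = min a b - 1 \<Longrightarrow> i = min (max a b) c - 1 \<Longrightarrow>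
  i = min b c - 1 \<and> i = min a (max b c) - 1"
  by (simp add: min_def max_def split: if_splits; linarith)
lemma ar_assoc2: "0 < (a::nat) \<Longrightarrow> 0 < b \<Longrightarrow> 0 < c \<Longrightarrow> i = min b c - 1 \<Longrightarrow> i = min a (max b c) - 1 \<Longrightarrow>
  i = min a b - 1 \<and> i = min (max a b) c - 1"
  by (simp add: min_def max_def split: if_splits; linarith)
lemma ar_dist: "0 < (a::nat) \<Longrightarrow> 0 < b \<Longrightarrow> 0 < c \<Longrightarrow> j = min b c - 1 \<Longrightarrow> i = min a (max b c) - 1 \<Longrightarrow> i < j \<Longrightarrow>
  a \<le> j \<and> j < b \<and> j < c \<and> i = a - 1"
  by (simp add: min_def max_def split: if_splits; linarith)


lemma R_assoc1:
  assumes o: "omega_polygraph P" and fb: "FB P N" and p: "pcell P (Cmp i (Cmp i u v) w)"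
    and d: "pdim P (Cmp i (Cmp i u v) w) \<le> N"
  shows "pceq P (Cmp i (Cmp i u v) w) (Cmp i u (Cmp i v w))"
proof -
  have W: "wfe P (Cmp i (Cmp i u v) w)" using pcell_wfe[OF o p] .
  then have wuv: "wfe P (Cmp i u v)" and wu: "wfe P u" and wv: "wfe P v" and ww: "wfe P w"
    and wd1: "wfd P i u v" and wd2: "wfd P i (Cmp i u v) w"
    and c1: "mbj P True i (eval P u) = mbj P False i (eval P v)"
    and c2: "mbj P True i (eval P (Cmp i u v)) = mbj P False i (eval P w)"
    by (simp_all del: eval.simps)
  have dd: "0 < pdim P u" "0 < pdim P v" "0 < pdim P w" "i = min (pdim P u) (pdim P v) - 1"
      "i = min (max (pdim P u) (pdim P v)) (pdim P w) - 1"
    using wd1 wd2 by (simp_all add: wfd_def)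
  note ar = ar_assoc1[OF dd]
  have wd3: "wfd P i v w" "wfd P i u (Cmp i v w)" using ar dd by (simp_all add: wfd_def)
  have "i < min (pdim P u) (pdim P v)" using dd(1,2,4) by (simp add: min_def)
  then have "bdj P True i (Cmp i u v) = bdj P True i v" using bdj_Cmp_low[OF o wd1, of i True] by simp
  then have c3: "mbj P True i (eval P v) = mbj P False i (eval P w)"
    using c2 Bj_all(1)[OF o wuv, of True i] Bj_all(1)[OF o wv, of True i] by simp
  have wvw: "wfe P (Cmp i v w)" using wv ww wd3 c3 by simp
  have "i < min (pdim P v) (pdim P w)" using ar dd(1,2,3) by (simp add: min_def)
  then have "bdj P False i (Cmp i v w) = bdj P False i v" using bdj_Cmp_low[OF o wd3(1), of i False] by simp
  then have c4: "mbj P True i (eval P u) = mbj P False i (eval P (Cmp i v w))"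
    using c1 Bj_all(1)[OF o wvw, of False i] Bj_all(1)[OF o wv, of False i] by simp
  have "wfe P (Cmp i u (Cmp i v w))" using wu wvw wd3 c4 by (simp del: eval.simps)
  moreover have "pdim P (Cmp i u (Cmp i v w)) \<le> N" using d by (simp add: max3_assoc)
  ultimately have "pcell P (Cmp i u (Cmp i v w))" using WP[OF o fb] by blast
  then show ?thesis using p unfolding pcell_def by (rule pceq.assoc[rotated])
qed

lemma R_assoc2:
  assumes o: "omega_polygraph P" and fb: "FB P N" and p: "pcell P (Cmp i u (Cmp i v w))"
    and d: "pdim P (Cmp i u (Cmp i v w)) \<le> N"
  shows "pceq P (Cmp i u (Cmp i v w)) (Cmp i (Cmp i u v) w)"
proof -
  have W: "wfe P (Cmp i u (Cmp i v w))" using pcell_wfe[OF o p] .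
  then have wvw: "wfe P (Cmp i v w)" and wu: "wfe P u" and wv: "wfe P v" and ww: "wfe P w"
    and wd1: "wfd P i v w" and wd2: "wfd P i u (Cmp i v w)"
    and c1: "mbj P True i (eval P v) = mbj P False i (eval P w)"
    and c2: "mbj P True i (eval P u) = mbj P False i (eval P (Cmp i v w))"
    by (simp_all del: eval.simps)
  have dd: "0 < pdim P u" "0 < pdim P v" "0 < pdim P w" "i = min (pdim P v) (pdim P w) - 1"
      "i = min (pdim P u) (max (pdim P v) (pdim P w)) - 1"
    using wd1 wd2 by (simp_all add: wfd_def)
  note ar = ar_assoc2[OF dd]
  have wd3: "wfd P i u v" "wfd P i (Cmp i u v) w" using ar dd by (simp_all add: wfd_def)
  have "i < min (pdim P v) (pdim P w)" using dd(2,3,4) by (simp add: min_def)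
  then have "bdj P False i (Cmp i v w) = bdj P False i v" using bdj_Cmp_low[OF o wd1, of i False] by simp
  then have c3: "mbj P True i (eval P u) = mbj P False i (eval P v)"
    using c2 Bj_all(1)[OF o wvw, of False i] Bj_all(1)[OF o wv, of False i] by simp
  have wuv: "wfe P (Cmp i u v)" using wu wv wd3 c3 by simp
  have "i < min (pdim P u) (pdim P v)" using ar dd(1,2,3) by (simp add: min_def)
  then have "bdj P True i (Cmp i u v) = bdj P True i v" using bdj_Cmp_low[OF o wd3(1), of i True] by simp
  then have c4: "mbj P True i (eval P (Cmp i u v)) = mbj P False i (eval P w)"
    using c1 Bj_all(1)[OF o wuv, of True i] Bj_all(1)[OF o wv, of True i] by simp
  have "wfe P (Cmp i (Cmp i u v) w)" using ww wuv wd3 c4 by (simp del: eval.simps)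
  moreover have "pdim P (Cmp i (Cmp i u v) w) \<le> N" using d by (simp add: max3_assoc)
  ultimately have "pcell P (Cmp i (Cmp i u v) w)" using WP[OF o fb] by blast
  then have "pceq P (Cmp i (Cmp i u v) w) (Cmp i u (Cmp i v w))"
    using p unfolding pcell_def by (rule pceq.assoc)
  then show ?thesis by (rule pceq.sym)
qed

lemma R_distl:
  assumes o: "omega_polygraph P" and fb: "FB P N" and ij: "i < j" and p: "pcell P (Cmp i u (Cmp j v w))"
    and d: "pdim P (Cmp i u (Cmp j v w)) \<le> N"
  shows "pceq P (Cmp i u (Cmp j v w)) (Cmp j (Cmp i u v) (Cmp i u w))"
proof -
  have W: "wfe P (Cmp i u (Cmp j v w))" using pcell_wfe[OF o p] .
  then have wvw: "wfe P (Cmp j v w)" and wu: "wfe P u" and wv: "wfe P v" and ww: "wfe P w"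
    and wdj: "wfd P j v w" and wdi: "wfd P i u (Cmp j v w)"
    and cj: "mbj P True j (eval P v) = mbj P False j (eval P w)"
    and ci: "mbj P True i (eval P u) = mbj P False i (eval P (Cmp j v w))"
    by (simp_all del: eval.simps)
  have dd: "0 < pdim P u" "0 < pdim P v" "0 < pdim P w" "j = min (pdim P v) (pdim P w) - 1"
      "i = min (pdim P u) (max (pdim P v) (pdim P w)) - 1"
    using wdj wdi by (simp_all add: wfd_def)
  note ar = ar_dist[OF dd ij]
  have wd: "wfd P i u v" "wfd P i u w" using ar dd by (simp_all add: wfd_def)
  have "i < min (pdim P v) (pdim P w)" using ar ij by simp
  then have "bdj P False i (Cmp j v w) = bdj P False i v" using bdj_Cmp_low[OF o wdj, of i False] by simp
  then have cA: "mbj P True i (eval P u) = mbj P False i (eval P v)"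
    using ci Bj_all(1)[OF o wvw, of False i] Bj_all(1)[OF o wv, of False i] by simp
  have "mbj P False i (eval P v) = mbj P False i (eval P w)"
    using Gj_all[OF o wv ij, of False True] Gj_all[OF o ww ij, of False False] cj by metis
  then have cB: "mbj P True i (eval P u) = mbj P False i (eval P w)" using cA by simp
  have wuv: "wfe P (Cmp i u v)" and wuw: "wfe P (Cmp i u w)" using wu wv ww wd cA cB by simp_all
  have wd2: "wfd P j (Cmp i u v) (Cmp i u w)" using ar dd by (simp add: wfd_def max_def)
  have b1: "bdj P True j (Cmp i u v) = Cmp i u (bdj P True j v)"
    using bdj_Cmp_mid[OF o wd(1)] ar dd by (simp add: bdj_triv)
  have b2: "bdj P False j (Cmp i u w) = Cmp i u (bdj P False j w)"
    using bdj_Cmp_mid[OF o wd(2)] ar dd by (simp add: bdj_triv)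
  have cC: "mbj P True j (eval P (Cmp i u v)) = mbj P False j (eval P (Cmp i u w))"
    using Bj_all(1)[OF o wuv, of True j] Bj_all(1)[OF o wuw, of False j] b1 b2
      Bj_all(1)[OF o wv, of True j] Bj_all(1)[OF o ww, of False j] cj by simp
  have "wfe P (Cmp j (Cmp i u v) (Cmp i u w))" using wuv wuw wd2 cC by (simp del: eval.simps)
  moreover have "pdim P (Cmp j (Cmp i u v) (Cmp i u w)) \<le> N" using d
    unfolding pdim.simps max3_dist[symmetric] .
  ultimately have "pcell P (Cmp j (Cmp i u v) (Cmp i u w))" using WP[OF o fb] by blast
  then show ?thesis using p ij unfolding pcell_def by (intro pceq.dist_l)
qed

lemma R_distr:
  assumes o: "omega_polygraph P" and fb: "FB P N" and ij: "i < j" and p: "pcell P (Cmp i (Cmp j v w) u)"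
    and d: "pdim P (Cmp i (Cmp j v w) u) \<le> N"
  shows "pceq P (Cmp i (Cmp j v w) u) (Cmp j (Cmp i v u) (Cmp i w u))"
proof -
  have W: "wfe P (Cmp i (Cmp j v w) u)" using pcell_wfe[OF o p] .
  then have wvw: "wfe P (Cmp j v w)" and wu: "wfe P u" and wv: "wfe P v" and ww: "wfe P w"
    and wdj: "wfd P j v w" and wdi: "wfd P i (Cmp j v w) u"
    and cj: "mbj P True j (eval P v) = mbj P False j (eval P w)"
    and ci: "mbj P True i (eval P (Cmp j v w)) = mbj P False i (eval P u)"
    by (simp_all del: eval.simps)
  have dd: "0 < pdim P u" "0 < pdim P v" "0 < pdim P w" "j = min (pdim P v) (pdim P w) - 1"
      "i = min (pdim P u) (max (pdim P v) (pdim P w)) - 1"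
    using wdj wdi by (simp_all add: wfd_def min.commute)
  note ar = ar_dist[OF dd ij]
  have wd: "wfd P i v u" "wfd P i w u" using ar dd by (simp_all add: wfd_def)
  have "i < min (pdim P v) (pdim P w)" using ar ij by simp
  then have "bdj P True i (Cmp j v w) = bdj P True i w" using bdj_Cmp_low[OF o wdj, of i True] by simp
  then have cB: "mbj P True i (eval P w) = mbj P False i (eval P u)"
    using ci Bj_all(1)[OF o wvw, of True i] Bj_all(1)[OF o ww, of True i] by simp
  have "mbj P True i (eval P v) = mbj P True i (eval P w)"
    using Gj_all[OF o wv ij, of True True] Gj_all[OF o ww ij, of True False] cj by metis
  then have cA: "mbj P True i (eval P v) = mbj P False i (eval P u)" using cB by simp
  have wvu: "wfe P (Cmp i v u)" and wwu: "wfe P (Cmp i w u)" using wu wv ww wd cA cB by simp_all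
  have wd2: "wfd P j (Cmp i v u) (Cmp i w u)" using ar dd by (simp add: wfd_def max_def)
  have b1: "bdj P True j (Cmp i v u) = Cmp i (bdj P True j v) u"
    using bdj_Cmp_mid[OF o wd(1)] ar dd by (simp add: bdj_triv)
  have b2: "bdj P False j (Cmp i w u) = Cmp i (bdj P False j w) u"
    using bdj_Cmp_mid[OF o wd(2)] ar dd by (simp add: bdj_triv)
  have cC: "mbj P True j (eval P (Cmp i v u)) = mbj P False j (eval P (Cmp i w u))"
    using Bj_all(1)[OF o wvu, of True j] Bj_all(1)[OF o wwu, of False j] b1 b2
      Bj_all(1)[OF o wv, of True j] Bj_all(1)[OF o ww, of False j] cj by simp
  have "wfe P (Cmp j (Cmp i v u) (Cmp i w u))" using wvu wwu wd2 cC by (simp del: eval.simps)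
  moreover have "pdim P (Cmp j (Cmp i v u) (Cmp i w u)) \<le> N" using d
    unfolding pdim.simps max3_dist_r[symmetric] .
  ultimately have "pcell P (Cmp j (Cmp i v u) (Cmp i w u))" using WP[OF o fb] by blast
  then show ?thesis using p ij unfolding pcell_def by (intro pceq.dist_r)
qed




fun padn :: "nat \<Rightarrow> 'g wh \<Rightarrow> 'g wh" where
  "padn 0 w = w" | "padn (Suc m) w = WC [] (padn m w) []"

lemma lay_padn[simp]: "lay (padn m w) = m + lay w"
  by (induction m) auto
lemma wgen_padn[simp]: "wgen (padn m w) = wgen w"
  by (induction m) auto
lemma padn_Suc_in: "padn (Suc m) w = padn m (WC [] w [])"
  by (induction m) auto
lemma wr_padn: "k \<le> lay X \<Longrightarrow> wr R k (padn m X) = padn m (wr R k X)"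
  by (induction m) auto
lemma wl_padn: "k \<le> lay X \<Longrightarrow> wl L k (padn m X) = padn m (wl L k X)"
  by (induction m) auto
lemma wfull_padn: "wfull g m = padn m (WG g)"
  by (induction m) auto

lemma chain_Cons: "ts \<noteq> [] \<Longrightarrow> chain j (t # ts) = Cmp j t (chain j ts)"
  by (cases ts) auto

lemma pdim_chain: "ts \<noteq> [] \<Longrightarrow> (\<forall>t\<in>set ts. pdim P t = n) \<Longrightarrow> pdim P (chain j ts) = n"
  by (induction j ts rule: chain.induct) auto

lemma pdim_rbw: "wsh P w \<Longrightarrow> pdim P (rbw w) = gdim P (wgen w)"
proof (induction w)
  case (WG g) then show ?case by simp
next
  case (WC L W R)
  have dW: "pdim P (rbw W) = gdim P (wgen W)" using WC by simp
  have dL: "L \<noteq> [] \<Longrightarrow> pdim P (chain (lay W) (map rbw L)) = Suc (lay W)"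
    using WC by (intro pdim_chain) auto
  have dR: "R \<noteq> [] \<Longrightarrow> pdim P (chain (lay W) (map rbw R)) = Suc (lay W)"
    using WC by (intro pdim_chain) auto
  have lt: "Suc (lay W) < gdim P (wgen W)" using WC.prems by simp
  show ?case using dW dL dR lt by (auto simp: lct_def rct_def)
qed

lemma pdim_rb: "csh P X \<Longrightarrow> pdim P (rb P X) = mdim P X"
proof (induction X)
  case (NW ws)
  then have "ws \<noteq> []" "\<forall>w\<in>set ws. wsh P w \<and> gdim P (wgen w) = mdim P (NW ws)" by (auto simp: wok_def)
  then show ?case by (simp add: pdim_chain pdim_rbw)
qed auto

lemma eval_chain: "ws \<noteq> [] \<Longrightarrow> (\<forall>w\<in>set ws. eval P (f w) = NW [w] \<and> gdim P (wgen w) = n) \<Longrightarrow>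
   eval P (chain j (map f ws)) = NW ws"
proof (induction ws)
  case Nil then show ?case by simp
next
  case (Cons w ws)
  show ?case
  proof (cases "ws = []")
    case True then show ?thesis using Cons by simp
  next
    case False
    then have "eval P (chain j (map f ws)) = NW ws" using Cons by simp
    moreover obtain w' ws' where "ws = w' # ws'" using False by (cases ws) auto
    ultimately show ?thesis using Cons False by (simp add: chain_Cons mc_NW_NW_eq)
  qed
qed

lemma eval_rbw: "omega_polygraph P \<Longrightarrow> wsh P w \<Longrightarrow> eval P (rbw w) = NW [padn (gdim P (wgen w) - 1 - lay w) w]"
proof (induction w)
  case (WG g) then show ?case by (simp add: wfull_padn)
next
  case (WC L W R)
  define n where "n = gdim P (wgen W)"
  have lt: "Suc (lay W) < n" using WC.prems n_def by simp
  define m where "m = n - 1 - Suc (lay W)"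
  have m: "n - 1 - lay W = Suc m" using lt m_def by simp
  have eW: "eval P (rbw W) = NW [padn (Suc m) W]" using WC m n_def by simp
  have eL: "L \<noteq> [] \<Longrightarrow> eval P (chain (lay W) (map rbw L)) = NW L"
    using WC by (intro eval_chain[of _ _ _ "Suc (lay W)"]) auto
  have eR: "R \<noteq> [] \<Longrightarrow> eval P (chain (lay W) (map rbw R)) = NW R"
    using WC by (intro eval_chain[of _ _ _ "Suc (lay W)"]) auto
  have dL: "L \<noteq> [] \<Longrightarrow> mdim P (NW L) = Suc (lay W)" using WC.prems by (cases L) auto
  have dR: "R \<noteq> [] \<Longrightarrow> mdim P (NW R) = Suc (lay W)" using WC.prems by (cases R) auto
  have r1: "eval P (rct (lay W) (rbw W) (map rbw R)) = NW [padn m (WC [] W R)]"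
  proof (cases "R = []")
    case True then show ?thesis using eW by (simp add: rct_def padn_Suc_in del: padn.simps)
  next
    case False
    have "mc P (NW [padn (Suc m) W]) (NW R) = NW [wr R (Suc (lay W)) (padn (Suc m) W)]"
      using mc_NW_rw[of P "NW R" "[padn (Suc m) W]"] dR False lt n_def by simp
    also have "wr R (Suc (lay W)) (padn (Suc m) W) = padn m (WC [] W R)"
      by (simp add: padn_Suc_in wr_padn del: padn.simps)
    finally show ?thesis using eW eR False by (simp add: rct_def)
  qed
  have "eval P (rbw (WC L W R)) = NW [padn m (WC L W R)]"
  proof (cases "L = []")
    case True then show ?thesis using r1 by (simp add: lct_def)
  next
    case False
    have "mc P (NW L) (NW [padn m (WC [] W R)]) = NW [wl L (Suc (lay W)) (padn m (WC [] W R))]"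
      using mc_NW_lw[of P "NW L" "[padn m (WC [] W R)]"] dL False lt n_def by simp
    also have "wl L (Suc (lay W)) (padn m (WC [] W R)) = padn m (WC L W R)"
      by (simp add: wl_padn del: padn.simps)
    finally show ?thesis using r1 eL False by (simp add: lct_def)
  qed
  moreover have "gdim P (wgen (WC L W R)) - 1 - lay (WC L W R) = m" using m_def n_def by simp
  ultimately show ?case by simp
qed

lemma eval_rb: "omega_polygraph P \<Longrightarrow> csh P X \<Longrightarrow> eval P (rb P X) = X"
proof (induction X)
  case (NG g) then show ?case by simp
next
  case (NI x) then show ?case by simp
next
  case (NW ws)
  have ne: "ws \<noteq> []" and wk: "wok P (mdim P (NW ws)) ws" using NW.prems by auto
  have "\<forall>w\<in>set ws. eval P (rbw w) = NW [w] \<and> gdim P (wgen w) = mdim P (NW ws)"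
  proof
    fix w assume "w \<in> set ws"
    then have "wsh P w" "gdim P (wgen w) = mdim P (NW ws)" "Suc (lay w) = gdim P (wgen w)"
      using wk by (auto simp: wok_def)
    then show "eval P (rbw w) = NW [w] \<and> gdim P (wgen w) = mdim P (NW ws)"
      using eval_rbw[OF NW.prems(1)] by simp
  qed
  then show ?case using eval_chain[OF ne] by simp
qed

lemma rbw_wfull: "rbw (wfull g m) = Gen g"
  by (induction m) (auto simp: lct_def rct_def)




lemma pceq_pdim: "omega_polygraph P \<Longrightarrow> pceq P x y \<Longrightarrow> pdim P x = pdim P y"
  using HER0 by blast

lemma pcell_refl: "pcell P x \<Longrightarrow> pceq P x x" by (simp add: pcell_def)

lemma K_cat_gen:
  assumes o: "omega_polygraph P" and fb: "FB P N"
  shows "xs \<noteq> [] \<Longrightarrow> ys \<noteq> [] \<Longrightarrow> pcell P (Cmp i (chain i xs) (chain i ys)) \<Longrightarrow>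
    pdim P (Cmp i (chain i xs) (chain i ys)) \<le> N \<Longrightarrow>
    pceq P (Cmp i (chain i xs) (chain i ys)) (chain i (xs @ ys))"
proof (induction xs)
  case Nil then show ?case by simp
next
  case (Cons x xs)
  show ?case
  proof (cases "xs = []")
    case True
    then show ?thesis using Cons.prems by (simp add: chain_Cons pcell_refl)
  next
    case False
    define X' where "X' = chain i xs"
    define Y where "Y = chain i ys"
    have c: "chain i (x # xs) = Cmp i x X'" using False by (simp add: chain_Cons X'_def)
    have p1: "pcell P (Cmp i (Cmp i x X') Y)" using Cons.prems c by (simp add: Y_def)
    have d1: "pdim P (Cmp i (Cmp i x X') Y) \<le> N" using Cons.prems c by (simp add: Y_def)
    have e1: "pceq P (Cmp i (Cmp i x X') Y) (Cmp i x (Cmp i X' Y))" using R_assoc1[OF o fb p1 d1] .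
    have p2: "pcell P (Cmp i x (Cmp i X' Y))" using pceq_refl2[OF e1] .
    have d2: "pdim P (Cmp i x (Cmp i X' Y)) \<le> N" using d1 pceq_pdim[OF o e1] by simp
    have p3: "pcell P (Cmp i X' Y)" "pcell P x" using pcell_CmpD[OF o p2] by auto
    have d3: "pdim P (Cmp i X' Y) \<le> N" using d2 by simp
    have e2: "pceq P (Cmp i X' Y) (chain i (xs @ ys))"
      using Cons.IH[OF False Cons.prems(2)] p3 d3 by (simp add: X'_def Y_def)
    have e3: "pceq P (Cmp i x (Cmp i X' Y)) (Cmp i x (chain i (xs @ ys)))"
      using R_cong[OF o fb p2 d2 pcell_refl[OF p3(2)] e2] .
    have "Cmp i x (chain i (xs @ ys)) = chain i ((x # xs) @ ys)" using False by (simp add: chain_Cons)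
    then show ?thesis using pceq.trans[OF e1 e3] c by (simp add: Y_def)
  qed
qed

lemma dist_chain_l:
  assumes o: "omega_polygraph P" and fb: "FB P N" and ij: "i < j"
  shows "ws \<noteq> [] \<Longrightarrow> (\<forall>w\<in>set ws. pcell P (Cmp i A (f w)) \<longrightarrow> pdim P (Cmp i A (f w)) \<le> N \<longrightarrow>
      pceq P (Cmp i A (f w)) (g w)) \<Longrightarrow> pcell P (Cmp i A (chain j (map f ws))) \<Longrightarrow>
    pdim P (Cmp i A (chain j (map f ws))) \<le> N \<Longrightarrow> pceq P (Cmp i A (chain j (map f ws))) (chain j (map g ws))"
proof (induction ws)
  case Nil then show ?case by simp
next
  case (Cons w ws)
  show ?case
  proof (cases "ws = []")
    case True then show ?thesis using Cons.prems by simp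
  next
    case False
    define F' where "F' = chain j (map f ws)"
    have c: "chain j (map f (w # ws)) = Cmp j (f w) F'" using False by (simp add: chain_Cons F'_def)
    have p1: "pcell P (Cmp i A (Cmp j (f w) F'))" using Cons.prems c by simp
    have d1: "pdim P (Cmp i A (Cmp j (f w) F')) \<le> N" using Cons.prems c by simp
    have e1: "pceq P (Cmp i A (Cmp j (f w) F')) (Cmp j (Cmp i A (f w)) (Cmp i A F'))"
      using R_distl[OF o fb ij p1 d1] .
    have p2: "pcell P (Cmp j (Cmp i A (f w)) (Cmp i A F'))" using pceq_refl2[OF e1] .
    have d2: "pdim P (Cmp j (Cmp i A (f w)) (Cmp i A F')) \<le> N" using d1 pceq_pdim[OF o e1] by simp
    have p3: "pcell P (Cmp i A (f w))" "pcell P (Cmp i A F')" using pcell_CmpD[OF o p2] by auto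
    have d3: "pdim P (Cmp i A (f w)) \<le> N" "pdim P (Cmp i A F') \<le> N" using d2 by auto
    have h1: "pceq P (Cmp i A (f w)) (g w)" using Cons.prems(2) p3 d3 by simp
    have h2: "pceq P (Cmp i A F') (chain j (map g ws))"
      using Cons.IH[OF False] Cons.prems(2) p3 d3 by (simp add: F'_def)
    have e2: "pceq P (Cmp j (Cmp i A (f w)) (Cmp i A F')) (Cmp j (g w) (chain j (map g ws)))"
      using R_cong[OF o fb p2 d2 h1 h2] .
    have "Cmp j (g w) (chain j (map g ws)) = chain j (map g (w # ws))" using False by (simp add: chain_Cons)
    then show ?thesis using pceq.trans[OF e1 e2] c by simp
  qed
qed

lemma dist_chain_r:
  assumes o: "omega_polygraph P" and fb: "FB P N" and ij: "i < j"
  shows "ws \<noteq> [] \<Longrightarrow> (\<forall>w\<in>set ws. pcell P (Cmp i (f w) B) \<longrightarrow> pdim P (Cmp i (f w) B) \<le> N \<longrightarrow>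
      pceq P (Cmp i (f w) B) (g w)) \<Longrightarrow> pcell P (Cmp i (chain j (map f ws)) B) \<Longrightarrow>
    pdim P (Cmp i (chain j (map f ws)) B) \<le> N \<Longrightarrow> pceq P (Cmp i (chain j (map f ws)) B) (chain j (map g ws))"
proof (induction ws)
  case Nil then show ?case by simp
next
  case (Cons w ws)
  show ?case
  proof (cases "ws = []")
    case True then show ?thesis using Cons.prems by simp
  next
    case False
    define F' where "F' = chain j (map f ws)"
    have c: "chain j (map f (w # ws)) = Cmp j (f w) F'" using False by (simp add: chain_Cons F'_def)
    have p1: "pcell P (Cmp i (Cmp j (f w) F') B)" using Cons.prems c by simp
    have d1: "pdim P (Cmp i (Cmp j (f w) F') B) \<le> N" using Cons.prems c by simp
    have e1: "pceq P (Cmp i (Cmp j (f w) F') B) (Cmp j (Cmp i (f w) B) (Cmp i F' B))"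
      using R_distr[OF o fb ij p1 d1] .
    have p2: "pcell P (Cmp j (Cmp i (f w) B) (Cmp i F' B))" using pceq_refl2[OF e1] .
    have d2: "pdim P (Cmp j (Cmp i (f w) B) (Cmp i F' B)) \<le> N" using d1 pceq_pdim[OF o e1] by simp
    have p3: "pcell P (Cmp i (f w) B)" "pcell P (Cmp i F' B)" using pcell_CmpD[OF o p2] by auto
    have d3: "pdim P (Cmp i (f w) B) \<le> N" "pdim P (Cmp i F' B) \<le> N" using d2 by auto
    have h1: "pceq P (Cmp i (f w) B) (g w)" using Cons.prems(2) p3 d3 by simp
    have h2: "pceq P (Cmp i F' B) (chain j (map g ws))"
      using Cons.IH[OF False] Cons.prems(2) p3 d3 by (simp add: F'_def)
    have e2: "pceq P (Cmp j (Cmp i (f w) B) (Cmp i F' B)) (Cmp j (g w) (chain j (map g ws)))"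
      using R_cong[OF o fb p2 d2 h1 h2] .
    have "Cmp j (g w) (chain j (map g ws)) = chain j (map g (w # ws))" using False by (simp add: chain_Cons)
    then show ?thesis using pceq.trans[OF e1 e2] c by simp
  qed
qed




lemma K_lw:
  assumes o: "omega_polygraph P" and fb: "FB P N" and a: "a \<noteq> []" and k1: "1 \<le> k"
  shows "wsh P w \<Longrightarrow> k \<le> lay w \<Longrightarrow> pcell P (Cmp (k-1) (chain (k-1) (map rbw a)) (rbw w)) \<Longrightarrow>
    pdim P (Cmp (k-1) (chain (k-1) (map rbw a)) (rbw w)) \<le> N \<Longrightarrow>
    pceq P (Cmp (k-1) (chain (k-1) (map rbw a)) (rbw w)) (rbw (wl a k w))"
proof (induction w)
  case (WG g) then show ?case using k1 by simp
next
  case (WC L W R)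
  define A' where "A' = chain (k-1) (map rbw a)"
  define Y where "Y = rct (lay W) (rbw W) (map rbw R)"
  define L' where "L' = chain (lay W) (map rbw L)"
  have wW: "wsh P W" using WC.prems(1) by simp
  have wL: "\<forall>x\<in>set L. wsh P x \<and> lay x = lay W" "\<forall>x\<in>set R. wsh P x \<and> lay x = lay W"
    using WC.prems(1) by auto
  have P3: "pcell P (Cmp (k-1) A' (rbw (WC L W R)))" using WC.prems(3) by (simp add: A'_def)
  have P4: "pdim P (Cmp (k-1) A' (rbw (WC L W R))) \<le> N" using WC.prems(4) by (simp add: A'_def)
  show ?case
  proof (cases "Suc (lay W) = k")
    case True
    have lw: "lay W = k - 1" using True by simp
    have wl_eq: "wl a k (WC L W R) = WC (a @ L) W R" using True by simp
    show ?thesis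
    proof (cases "L = []")
      case True
      then have "rbw (WC L W R) = Y" by (simp add: lct_def Y_def)
      moreover have "rbw (WC (a @ L) W R) = Cmp (k-1) A' Y" using True a lw by (simp add: lct_def Y_def A'_def)
      ultimately show ?thesis using wl_eq P3 by (simp add: pcell_refl A'_def)
    next
      case False
      have r1: "rbw (WC L W R) = Cmp (k-1) L' Y" using False lw by (simp add: lct_def Y_def L'_def)
      have p1: "pcell P (Cmp (k-1) A' (Cmp (k-1) L' Y))" using P3 r1 by simp
      have d1: "pdim P (Cmp (k-1) A' (Cmp (k-1) L' Y)) \<le> N" using P4 r1 by simp
      have e1: "pceq P (Cmp (k-1) A' (Cmp (k-1) L' Y)) (Cmp (k-1) (Cmp (k-1) A' L') Y)"
        using R_assoc2[OF o fb p1 d1] .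
      have p2: "pcell P (Cmp (k-1) (Cmp (k-1) A' L') Y)" using pceq_refl2[OF e1] .
      have d2: "pdim P (Cmp (k-1) (Cmp (k-1) A' L') Y) \<le> N" using d1 pceq_pdim[OF o e1] by simp
      have p3: "pcell P (Cmp (k-1) A' L')" "pcell P Y" using pcell_CmpD[OF o p2] by auto
      have p3': "pcell P (Cmp (k-1) (chain (k-1) (map rbw a)) (chain (k-1) (map rbw L)))"
        using p3(1) lw by (simp add: A'_def L'_def)
      have d3': "pdim P (Cmp (k-1) (chain (k-1) (map rbw a)) (chain (k-1) (map rbw L))) \<le> N"
        using d2 lw by (simp add: A'_def L'_def)
      have e2: "pceq P (Cmp (k-1) A' L') (chain (k-1) (map rbw a @ map rbw L))"
        using K_cat_gen[OF o fb _ _ p3' d3'] a False lw by (simp add: A'_def L'_def)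
      have e3: "pceq P (Cmp (k-1) (Cmp (k-1) A' L') Y) (Cmp (k-1) (chain (k-1) (map rbw a @ map rbw L)) Y)"
        using R_cong[OF o fb p2 d2 e2 pcell_refl[OF p3(2)]] .
      have "rbw (WC (a @ L) W R) = Cmp (k-1) (chain (k-1) (map rbw a @ map rbw L)) Y"
        using a lw by (simp add: lct_def Y_def)
      then show ?thesis using pceq.trans[OF e1 e3] r1 wl_eq by (simp add: A'_def)
    qed
  next
    case False
    then have lt: "k < Suc (lay W)" using WC.prems(2) by simp
    have ij: "k - 1 < lay W" using lt k1 by simp
    have wl_eq: "wl a k (WC L W R) = WC (map (wl a k) L) (wl a k W) (map (wl a k) R)" using lt by simp
    have IHW: "pcell P (Cmp (k-1) A' (rbw W)) \<Longrightarrow> pdim P (Cmp (k-1) A' (rbw W)) \<le> N \<Longrightarrow>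
        pceq P (Cmp (k-1) A' (rbw W)) (rbw (wl a k W))"
      using WC.IH(2) wW lt by (simp add: A'_def)
    have IHL: "\<forall>x\<in>set L. pcell P (Cmp (k-1) A' (rbw x)) \<longrightarrow> pdim P (Cmp (k-1) A' (rbw x)) \<le> N \<longrightarrow>
        pceq P (Cmp (k-1) A' (rbw x)) (rbw (wl a k x))"
      using WC.IH(1) wL lt by (auto simp: A'_def)
    have IHR: "\<forall>x\<in>set R. pcell P (Cmp (k-1) A' (rbw x)) \<longrightarrow> pdim P (Cmp (k-1) A' (rbw x)) \<le> N \<longrightarrow>
        pceq P (Cmp (k-1) A' (rbw x)) (rbw (wl a k x))"
      using WC.IH(3) wL lt by (auto simp: A'_def)
    have rc: "pcell P (Cmp (k-1) A' Y) \<Longrightarrow> pdim P (Cmp (k-1) A' Y) \<le> N \<Longrightarrow>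
        pceq P (Cmp (k-1) A' Y) (rct (lay W) (rbw (wl a k W)) (map (\<lambda>x. rbw (wl a k x)) R))"
    proof (cases "R = []")
      case True
      then show "pcell P (Cmp (k-1) A' Y) \<Longrightarrow> pdim P (Cmp (k-1) A' Y) \<le> N \<Longrightarrow> ?thesis"
        using IHW by (simp add: Y_def rct_def)
    next
      case False
      assume p0: "pcell P (Cmp (k-1) A' Y)" and d0: "pdim P (Cmp (k-1) A' Y) \<le> N"
      define R' where "R' = chain (lay W) (map rbw R)"
      have y: "Y = Cmp (lay W) (rbw W) R'" using False by (simp add: Y_def rct_def R'_def)
      have p1: "pcell P (Cmp (k-1) A' (Cmp (lay W) (rbw W) R'))" using p0 y by simp
      have d1: "pdim P (Cmp (k-1) A' (Cmp (lay W) (rbw W) R')) \<le> N" using d0 y by simp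
      have e1: "pceq P (Cmp (k-1) A' (Cmp (lay W) (rbw W) R')) (Cmp (lay W) (Cmp (k-1) A' (rbw W)) (Cmp (k-1) A' R'))"
        using R_distl[OF o fb ij p1 d1] .
      have p2: "pcell P (Cmp (lay W) (Cmp (k-1) A' (rbw W)) (Cmp (k-1) A' R'))" using pceq_refl2[OF e1] .
      have d2: "pdim P (Cmp (lay W) (Cmp (k-1) A' (rbw W)) (Cmp (k-1) A' R')) \<le> N" using d1 pceq_pdim[OF o e1] by simp
      have p3: "pcell P (Cmp (k-1) A' (rbw W))" "pcell P (Cmp (k-1) A' R')" using pcell_CmpD[OF o p2] by auto
      have d3: "pdim P (Cmp (k-1) A' (rbw W)) \<le> N" "pdim P (Cmp (k-1) A' R') \<le> N" using d2 by auto
      have h1: "pceq P (Cmp (k-1) A' (rbw W)) (rbw (wl a k W))" using IHW p3 d3 by simp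
      have h2: "pceq P (Cmp (k-1) A' R') (chain (lay W) (map (\<lambda>x. rbw (wl a k x)) R))"
        using dist_chain_l[OF o fb ij False IHR] p3 d3 by (simp add: R'_def)
      have e2: "pceq P (Cmp (lay W) (Cmp (k-1) A' (rbw W)) (Cmp (k-1) A' R'))
          (Cmp (lay W) (rbw (wl a k W)) (chain (lay W) (map (\<lambda>x. rbw (wl a k x)) R)))"
        using R_cong[OF o fb p2 d2 h1 h2] .
      show ?thesis using pceq.trans[OF e1 e2] y False by (simp add: rct_def)
    qed
    have rhs: "rbw (wl a k (WC L W R)) = lct (lay W) (map (\<lambda>x. rbw (wl a k x)) L)
        (rct (lay W) (rbw (wl a k W)) (map (\<lambda>x. rbw (wl a k x)) R))"
      using wl_eq by (simp add: comp_def)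
    show ?thesis
    proof (cases "L = []")
      case True
      then have "rbw (WC L W R) = Y" by (simp add: lct_def Y_def)
      then show ?thesis using rc P3 P4 rhs True by (simp add: lct_def A'_def)
    next
      case False
      have r1: "rbw (WC L W R) = Cmp (lay W) L' Y" using False by (simp add: lct_def Y_def L'_def)
      have p1: "pcell P (Cmp (k-1) A' (Cmp (lay W) L' Y))" using P3 r1 by simp
      have d1: "pdim P (Cmp (k-1) A' (Cmp (lay W) L' Y)) \<le> N" using P4 r1 by simp
      have e1: "pceq P (Cmp (k-1) A' (Cmp (lay W) L' Y)) (Cmp (lay W) (Cmp (k-1) A' L') (Cmp (k-1) A' Y))"
        using R_distl[OF o fb ij p1 d1] .
      have p2: "pcell P (Cmp (lay W) (Cmp (k-1) A' L') (Cmp (k-1) A' Y))" using pceq_refl2[OF e1] .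
      have d2: "pdim P (Cmp (lay W) (Cmp (k-1) A' L') (Cmp (k-1) A' Y)) \<le> N" using d1 pceq_pdim[OF o e1] by simp
      have p3: "pcell P (Cmp (k-1) A' L')" "pcell P (Cmp (k-1) A' Y)" using pcell_CmpD[OF o p2] by auto
      have d3: "pdim P (Cmp (k-1) A' L') \<le> N" "pdim P (Cmp (k-1) A' Y) \<le> N" using d2 by auto
      have h1: "pceq P (Cmp (k-1) A' L') (chain (lay W) (map (\<lambda>x. rbw (wl a k x)) L))"
        using dist_chain_l[OF o fb ij False IHL] p3 d3 by (simp add: L'_def)
      have e2: "pceq P (Cmp (lay W) (Cmp (k-1) A' L') (Cmp (k-1) A' Y))
          (Cmp (lay W) (chain (lay W) (map (\<lambda>x. rbw (wl a k x)) L))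
             (rct (lay W) (rbw (wl a k W)) (map (\<lambda>x. rbw (wl a k x)) R)))"
        using R_cong[OF o fb p2 d2 h1 rc[OF p3(2) d3(2)]] .
      show ?thesis using pceq.trans[OF e1 e2] r1 rhs False by (simp add: lct_def A'_def)
    qed
  qed
qed


lemma K_rw:
  assumes o: "omega_polygraph P" and fb: "FB P N" and b: "b \<noteq> []" and k1: "1 \<le> k"
  shows "wsh P w \<Longrightarrow> k \<le> lay w \<Longrightarrow> pcell P (Cmp (k-1) (rbw w) (chain (k-1) (map rbw b))) \<Longrightarrow>
    pdim P (Cmp (k-1) (rbw w) (chain (k-1) (map rbw b))) \<le> N \<Longrightarrow>
    pceq P (Cmp (k-1) (rbw w) (chain (k-1) (map rbw b))) (rbw (wr b k w))"
proof (induction w)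
  case (WG g) then show ?case using k1 by simp
next
  case (WC L W R)
  define B' where "B' = chain (k-1) (map rbw b)"
  define Y where "Y = rct (lay W) (rbw W) (map rbw R)"
  define L' where "L' = chain (lay W) (map rbw L)"
  define R' where "R' = chain (lay W) (map rbw R)"
  have wW: "wsh P W" using WC.prems(1) by simp
  have wL: "\<forall>x\<in>set L. wsh P x \<and> lay x = lay W" "\<forall>x\<in>set R. wsh P x \<and> lay x = lay W"
    using WC.prems(1) by auto
  have P3: "pcell P (Cmp (k-1) (rbw (WC L W R)) B')" using WC.prems(3) by (simp add: B'_def)
  have P4: "pdim P (Cmp (k-1) (rbw (WC L W R)) B') \<le> N" using WC.prems(4) by (simp add: B'_def)
  show ?case
  proof (cases "Suc (lay W) = k")
    case True
    have lw: "lay W = k - 1" using True by simp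
    have wr_eq: "wr b k (WC L W R) = WC L W (R @ b)" using True by simp
    define Z where "Z = Cmp (k-1) (rbw W) (chain (k-1) (map rbw R @ map rbw b))"
    have rhs: "rbw (WC L W (R @ b)) = lct (k-1) (map rbw L) Z" using b lw by (simp add: rct_def Z_def)
    have sub: "pcell P (Cmp (k-1) Y B') \<Longrightarrow> pdim P (Cmp (k-1) Y B') \<le> N \<Longrightarrow> pceq P (Cmp (k-1) Y B') Z"
    proof (cases "R = []")
      case True
      then show "pcell P (Cmp (k-1) Y B') \<Longrightarrow> pdim P (Cmp (k-1) Y B') \<le> N \<Longrightarrow> ?thesis"
        using lw by (simp add: Y_def rct_def Z_def B'_def pcell_refl)
    next
      case False
      assume p0: "pcell P (Cmp (k-1) Y B')" and d0: "pdim P (Cmp (k-1) Y B') \<le> N"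
      have y: "Y = Cmp (k-1) (rbw W) R'" using False lw by (simp add: Y_def rct_def R'_def)
      have p1: "pcell P (Cmp (k-1) (Cmp (k-1) (rbw W) R') B')" using p0 y by simp
      have d1: "pdim P (Cmp (k-1) (Cmp (k-1) (rbw W) R') B') \<le> N" using d0 y by simp
      have e1: "pceq P (Cmp (k-1) (Cmp (k-1) (rbw W) R') B') (Cmp (k-1) (rbw W) (Cmp (k-1) R' B'))"
        using R_assoc1[OF o fb p1 d1] .
      have p2: "pcell P (Cmp (k-1) (rbw W) (Cmp (k-1) R' B'))" using pceq_refl2[OF e1] .
      have d2: "pdim P (Cmp (k-1) (rbw W) (Cmp (k-1) R' B')) \<le> N" using d1 pceq_pdim[OF o e1] by simp
      have p3: "pcell P (rbw W)" "pcell P (Cmp (k-1) R' B')" using pcell_CmpD[OF o p2] by auto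
      have p3': "pcell P (Cmp (k-1) (chain (k-1) (map rbw R)) (chain (k-1) (map rbw b)))"
        using p3(2) lw by (simp add: R'_def B'_def)
      have d3': "pdim P (Cmp (k-1) (chain (k-1) (map rbw R)) (chain (k-1) (map rbw b))) \<le> N"
        using d2 lw by (simp add: R'_def B'_def)
      have e2: "pceq P (Cmp (k-1) R' B') (chain (k-1) (map rbw R @ map rbw b))"
        using K_cat_gen[OF o fb _ _ p3' d3'] b False lw by (simp add: R'_def B'_def)
      have e3: "pceq P (Cmp (k-1) (rbw W) (Cmp (k-1) R' B')) Z"
        using R_cong[OF o fb p2 d2 pcell_refl[OF p3(1)] e2] by (simp add: Z_def)
      show ?thesis using pceq.trans[OF e1 e3] y by simp
    qed
    show ?thesis
    proof (cases "L = []")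
      case True
      then have "rbw (WC L W R) = Y" by (simp add: lct_def Y_def)
      then show ?thesis using sub P3 P4 rhs wr_eq True by (simp add: lct_def B'_def)
    next
      case False
      have r1: "rbw (WC L W R) = Cmp (k-1) L' Y" using False lw by (simp add: lct_def Y_def L'_def)
      have p1: "pcell P (Cmp (k-1) (Cmp (k-1) L' Y) B')" using P3 r1 by simp
      have d1: "pdim P (Cmp (k-1) (Cmp (k-1) L' Y) B') \<le> N" using P4 r1 by simp
      have e1: "pceq P (Cmp (k-1) (Cmp (k-1) L' Y) B') (Cmp (k-1) L' (Cmp (k-1) Y B'))"
        using R_assoc1[OF o fb p1 d1] .
      have p2: "pcell P (Cmp (k-1) L' (Cmp (k-1) Y B'))" using pceq_refl2[OF e1] .
      have d2: "pdim P (Cmp (k-1) L' (Cmp (k-1) Y B')) \<le> N" using d1 pceq_pdim[OF o e1] by simp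
      have p3: "pcell P L'" "pcell P (Cmp (k-1) Y B')" using pcell_CmpD[OF o p2] by auto
      have e2: "pceq P (Cmp (k-1) L' (Cmp (k-1) Y B')) (Cmp (k-1) L' Z)"
        using R_cong[OF o fb p2 d2 pcell_refl[OF p3(1)] sub[OF p3(2)]] d2 by simp
      have "rbw (WC L W (R @ b)) = Cmp (k-1) L' Z" using rhs False lw by (simp add: lct_def L'_def)
      then show ?thesis using pceq.trans[OF e1 e2] r1 wr_eq by (simp add: B'_def)
    qed
  next
    case False
    then have lt: "k < Suc (lay W)" using WC.prems(2) by simp
    have ij: "k - 1 < lay W" using lt k1 by simp
    have wr_eq: "wr b k (WC L W R) = WC (map (wr b k) L) (wr b k W) (map (wr b k) R)" using lt by simp
    have IHW: "pcell P (Cmp (k-1) (rbw W) B') \<Longrightarrow> pdim P (Cmp (k-1) (rbw W) B') \<le> N \<Longrightarrow>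
        pceq P (Cmp (k-1) (rbw W) B') (rbw (wr b k W))"
      using WC.IH(2) wW lt by (simp add: B'_def)
    have IHL: "\<forall>x\<in>set L. pcell P (Cmp (k-1) (rbw x) B') \<longrightarrow> pdim P (Cmp (k-1) (rbw x) B') \<le> N \<longrightarrow>
        pceq P (Cmp (k-1) (rbw x) B') (rbw (wr b k x))"
      using WC.IH(1) wL lt by (auto simp: B'_def)
    have IHR: "\<forall>x\<in>set R. pcell P (Cmp (k-1) (rbw x) B') \<longrightarrow> pdim P (Cmp (k-1) (rbw x) B') \<le> N \<longrightarrow>
        pceq P (Cmp (k-1) (rbw x) B') (rbw (wr b k x))"
      using WC.IH(3) wL lt by (auto simp: B'_def)
    have rc: "pcell P (Cmp (k-1) Y B') \<Longrightarrow> pdim P (Cmp (k-1) Y B') \<le> N \<Longrightarrow>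
        pceq P (Cmp (k-1) Y B') (rct (lay W) (rbw (wr b k W)) (map (\<lambda>x. rbw (wr b k x)) R))"
    proof (cases "R = []")
      case True
      then show "pcell P (Cmp (k-1) Y B') \<Longrightarrow> pdim P (Cmp (k-1) Y B') \<le> N \<Longrightarrow> ?thesis"
        using IHW by (simp add: Y_def rct_def)
    next
      case False
      assume p0: "pcell P (Cmp (k-1) Y B')" and d0: "pdim P (Cmp (k-1) Y B') \<le> N"
      have y: "Y = Cmp (lay W) (rbw W) R'" using False by (simp add: Y_def rct_def R'_def)
      have p1: "pcell P (Cmp (k-1) (Cmp (lay W) (rbw W) R') B')" using p0 y by simp
      have d1: "pdim P (Cmp (k-1) (Cmp (lay W) (rbw W) R') B') \<le> N" using d0 y by simp
      have e1: "pceq P (Cmp (k-1) (Cmp (lay W) (rbw W) R') B') (Cmp (lay W) (Cmp (k-1) (rbw W) B') (Cmp (k-1) R' B'))"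
        using R_distr[OF o fb ij p1 d1] .
      have p2: "pcell P (Cmp (lay W) (Cmp (k-1) (rbw W) B') (Cmp (k-1) R' B'))" using pceq_refl2[OF e1] .
      have d2: "pdim P (Cmp (lay W) (Cmp (k-1) (rbw W) B') (Cmp (k-1) R' B')) \<le> N" using d1 pceq_pdim[OF o e1] by simp
      have p3: "pcell P (Cmp (k-1) (rbw W) B')" "pcell P (Cmp (k-1) R' B')" using pcell_CmpD[OF o p2] by auto
      have d3: "pdim P (Cmp (k-1) (rbw W) B') \<le> N" "pdim P (Cmp (k-1) R' B') \<le> N" using d2 by auto
      have h1: "pceq P (Cmp (k-1) (rbw W) B') (rbw (wr b k W))" using IHW p3 d3 by simp
      have h2: "pceq P (Cmp (k-1) R' B') (chain (lay W) (map (\<lambda>x. rbw (wr b k x)) R))"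
        using dist_chain_r[OF o fb ij False IHR] p3 d3 by (simp add: R'_def)
      have e2: "pceq P (Cmp (lay W) (Cmp (k-1) (rbw W) B') (Cmp (k-1) R' B'))
          (Cmp (lay W) (rbw (wr b k W)) (chain (lay W) (map (\<lambda>x. rbw (wr b k x)) R)))"
        using R_cong[OF o fb p2 d2 h1 h2] .
      show ?thesis using pceq.trans[OF e1 e2] y False by (simp add: rct_def)
    qed
    have rhs: "rbw (wr b k (WC L W R)) = lct (lay W) (map (\<lambda>x. rbw (wr b k x)) L)
        (rct (lay W) (rbw (wr b k W)) (map (\<lambda>x. rbw (wr b k x)) R))"
      using wr_eq by (simp add: comp_def)
    show ?thesis
    proof (cases "L = []")
      case True
      then have "rbw (WC L W R) = Y" by (simp add: lct_def Y_def)
      then show ?thesis using rc P3 P4 rhs True by (simp add: lct_def B'_def)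
    next
      case False
      have r1: "rbw (WC L W R) = Cmp (lay W) L' Y" using False by (simp add: lct_def Y_def L'_def)
      have p1: "pcell P (Cmp (k-1) (Cmp (lay W) L' Y) B')" using P3 r1 by simp
      have d1: "pdim P (Cmp (k-1) (Cmp (lay W) L' Y) B') \<le> N" using P4 r1 by simp
      have e1: "pceq P (Cmp (k-1) (Cmp (lay W) L' Y) B') (Cmp (lay W) (Cmp (k-1) L' B') (Cmp (k-1) Y B'))"
        using R_distr[OF o fb ij p1 d1] .
      have p2: "pcell P (Cmp (lay W) (Cmp (k-1) L' B') (Cmp (k-1) Y B'))" using pceq_refl2[OF e1] .
      have d2: "pdim P (Cmp (lay W) (Cmp (k-1) L' B') (Cmp (k-1) Y B')) \<le> N" using d1 pceq_pdim[OF o e1] by simp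
      have p3: "pcell P (Cmp (k-1) L' B')" "pcell P (Cmp (k-1) Y B')" using pcell_CmpD[OF o p2] by auto
      have d3: "pdim P (Cmp (k-1) L' B') \<le> N" "pdim P (Cmp (k-1) Y B') \<le> N" using d2 by auto
      have h1: "pceq P (Cmp (k-1) L' B') (chain (lay W) (map (\<lambda>x. rbw (wr b k x)) L))"
        using dist_chain_r[OF o fb ij False IHL] p3 d3 by (simp add: L'_def)
      have e2: "pceq P (Cmp (lay W) (Cmp (k-1) L' B') (Cmp (k-1) Y B'))
          (Cmp (lay W) (chain (lay W) (map (\<lambda>x. rbw (wr b k x)) L))
             (rct (lay W) (rbw (wr b k W)) (map (\<lambda>x. rbw (wr b k x)) R)))"
        using R_cong[OF o fb p2 d2 h1 rc[OF p3(2) d3(2)]] .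
      show ?thesis using pceq.trans[OF e1 e2] r1 rhs False by (simp add: lct_def B'_def)
    qed
  qed
qed




lemma csh_NI: "csh P (NI x) \<Longrightarrow> csh P x" by simp

lemma K:
  assumes o: "omega_polygraph P" and fb: "FB P N"
  shows "csh P A \<Longrightarrow> csh P C \<Longrightarrow> pcell P (Cmp i (rb P A) (rb P C)) \<Longrightarrow>
    pdim P (Cmp i (rb P A) (rb P C)) \<le> N \<Longrightarrow> pceq P (Cmp i (rb P A) (rb P C)) (rb P (mc P A C))"
proof (induction "size A + size C" arbitrary: A C rule: less_induct)
  case less
  note p = less.prems(3) and d = less.prems(4)
  have wd: "wfd P i (rb P A) (rb P C)" using pcell_CmpD(3)[OF o p] .
  have dA: "pdim P (rb P A) = mdim P A" and dC: "pdim P (rb P C) = mdim P C"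
    using pdim_rb less.prems(1,2) by auto
  have dA0: "0 < mdim P A" and dC0: "0 < mdim P C" and iv: "i = min (mdim P A) (mdim P C) - 1"
    using wd dA dC by (auto simp: wfd_def)
  consider (eq) "mdim P A = mdim P C" | (lt) "mdim P A < mdim P C" | (gt) "mdim P C < mdim P A" by linarith
  then show ?case
  proof cases
    case eq
    show ?thesis
    proof (cases A)
      case (NG g) then show ?thesis using dA0 by simp
    next
      case (NI x)
      have dx: "pdim P (rb P x) = i" using pdim_rb[of P x] less.prems(1) NI iv eq by simp
      have "pceq P (Cmp i (Idt (rb P x)) (rb P C)) (rb P C)"
        using R_unitl[OF o fb _ _ dx] p d NI by simp
      moreover have "mc P A C = C" using NI eq by (simp add: mc_def)
      ultimately show ?thesis using NI by simp
    next
      case (NW a)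
      have ane: "a \<noteq> []" using less.prems(1) NW by simp
      show ?thesis
      proof (cases C)
        case (NG g) then show ?thesis using dC0 by simp
      next
        case (NI z)
        have dz: "pdim P (rb P z) = i" using pdim_rb[of P z] less.prems(2) NI iv eq by simp
        have "pceq P (Cmp i (rb P A) (Idt (rb P z))) (rb P A)"
          using R_unitr[OF o fb _ _ dz] p d NI by simp
        moreover have "mc P A C = A" using NI NW eq by (simp add: mc_def)
        ultimately show ?thesis using NI by simp
      next
        case (NW c)
        have cne: "c \<noteq> []" using less.prems(2) NW by simp
        have ia: "i = mdim P (NW a) - 1" "i = mdim P (NW c) - 1" using iv eq \<open>A = NW a\<close> NW by auto
        have r: "rb P A = chain i (map rbw a)" "rb P C = chain i (map rbw c)" using ia \<open>A = NW a\<close> NW by auto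
        have e: "pceq P (Cmp i (chain i (map rbw a)) (chain i (map rbw c))) (chain i (map rbw a @ map rbw c))"
          using K_cat_gen[OF o fb] p d r ane cne by simp
        have "mc P A C = NW (a @ c)" using \<open>A = NW a\<close> NW eq by (simp add: mc_NW_NW_eq)
        moreover have "mdim P (NW (a @ c)) = mdim P (NW a)" using ane by (cases a) auto
        ultimately show ?thesis using e r ia by simp
      qed
    qed
  next
    case lt
    have iv': "i = mdim P A - 1" using iv lt by simp
    show ?thesis
    proof (cases A)
      case (NG g) then show ?thesis using dA0 by simp
    next
      case (NI x)
      have dx: "pdim P (rb P x) = i" using pdim_rb[of P x] less.prems(1) NI iv' by simp
      have "pceq P (Cmp i (Idt (rb P x)) (rb P C)) (rb P C)"
        using R_unitl[OF o fb _ _ dx] p d NI by simp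
      moreover have "mc P A C = C" using NI lt by (simp add: mc_NI_left)
      ultimately show ?thesis using NI by simp
    next
      case (NW a)
      have ane: "a \<noteq> []" and wka: "wok P (mdim P A) a" using less.prems(1) NW by auto
      show ?thesis
      proof (cases C)
        case (NG g) then show ?thesis using dC0 by simp
      next
        case (NI y)
        have le: "pdim P (rb P A) \<le> pdim P (rb P y)" using dA pdim_rb[of P y] less.prems(2) NI lt by simp
        have e1: "pceq P (Cmp i (rb P A) (Idt (rb P y))) (Idt (Cmp i (rb P A) (rb P y)))"
          using R_idl[OF o fb _ _ le] p d NI by simp
        have p2: "pcell P (Cmp i (rb P A) (rb P y))" using pcell_IdtD[OF o pceq_refl2[OF e1]] .
        have d2: "pdim P (Cmp i (rb P A) (rb P y)) \<le> N" using d NI le by simp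
        have "pceq P (Cmp i (rb P A) (rb P y)) (rb P (mc P A y))"
          using less.hyps[of A y] NI less.prems(1,2) p2 d2 by simp
        then have e2: "pceq P (Idt (Cmp i (rb P A) (rb P y))) (Idt (rb P (mc P A y)))" by (rule pceq.idt)
        have "mc P A C = NI (mc P A y)" using NI lt by (simp add: mc_NI_right_lw)
        then show ?thesis using pceq.trans[OF e1 e2] NI by simp
      next
        case (NW ws)
        define k where "k = mdim P A"
        define n where "n = mdim P C"
        have wne: "ws \<noteq> []" and wkw: "wok P n ws" using less.prems(2) NW n_def by auto
        have k1: "1 \<le> k" using dA0 k_def by simp
        have ij: "k - 1 < n - 1" using lt k_def n_def k1 by simp
        have rA: "rb P A = chain (k-1) (map rbw a)" using \<open>A = NW a\<close> k_def by simp
        have rC: "rb P C = chain (n-1) (map rbw ws)" using NW n_def by simp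
        have hyp: "\<forall>w\<in>set ws. pcell P (Cmp (k-1) (chain (k-1) (map rbw a)) (rbw w)) \<longrightarrow>
            pdim P (Cmp (k-1) (chain (k-1) (map rbw a)) (rbw w)) \<le> N \<longrightarrow>
            pceq P (Cmp (k-1) (chain (k-1) (map rbw a)) (rbw w)) (rbw (wl a k w))"
        proof (intro ballI impI)
          fix w assume w: "w \<in> set ws" and pw: "pcell P (Cmp (k-1) (chain (k-1) (map rbw a)) (rbw w))"
            and dw: "pdim P (Cmp (k-1) (chain (k-1) (map rbw a)) (rbw w)) \<le> N"
          have "wsh P w" "Suc (lay w) = n" using wkw w by (auto simp: wok_def)
          then show "pceq P (Cmp (k-1) (chain (k-1) (map rbw a)) (rbw w)) (rbw (wl a k w))"
            using K_lw[OF o fb ane k1] pw dw lt k_def n_def by simp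
        qed
        have e: "pceq P (Cmp (k-1) (chain (k-1) (map rbw a)) (chain (n-1) (map rbw ws)))
            (chain (n-1) (map (\<lambda>w. rbw (wl a k w)) ws))"
          using dist_chain_l[OF o fb ij wne hyp] p d rA rC iv' k_def by simp
        have "mc P A C = NW (map (wl a k) ws)" using \<open>A = NW a\<close> NW lt k_def by (simp add: mc_NW_lw)
        moreover have "rb P (NW (map (wl a k) ws)) = chain (n-1) (map (\<lambda>w. rbw (wl a k w)) ws)"
          using NW n_def by (simp add: comp_def)
        ultimately show ?thesis using e rA rC iv' k_def by simp
      qed
    qed
  next
    case gt
    have iv': "i = mdim P C - 1" using iv gt by simp
    show ?thesis
    proof (cases A)
      case (NG g) then show ?thesis using dA0 by simp
    next
      case (NI x)
      have le: "pdim P (rb P C) \<le> pdim P (rb P x)" using dC pdim_rb[of P x] less.prems(1) NI gt by simp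
      have e1: "pceq P (Cmp i (Idt (rb P x)) (rb P C)) (Idt (Cmp i (rb P x) (rb P C)))"
        using R_idr[OF o fb _ _ le] p d NI by simp
      have p2: "pcell P (Cmp i (rb P x) (rb P C))" using pcell_IdtD[OF o pceq_refl2[OF e1]] .
      have d2: "pdim P (Cmp i (rb P x) (rb P C)) \<le> N" using d NI le by simp
      have "pceq P (Cmp i (rb P x) (rb P C)) (rb P (mc P x C))"
        using less.hyps[of x C] NI less.prems(1,2) p2 d2 by simp
      then have e2: "pceq P (Idt (Cmp i (rb P x) (rb P C))) (Idt (rb P (mc P x C)))" by (rule pceq.idt)
      have "mc P A C = NI (mc P x C)" using NI gt by (simp add: mc_NI_left_rw)
      then show ?thesis using pceq.trans[OF e1 e2] NI by simp
    next
      case (NW ws)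
      have wne: "ws \<noteq> []" using less.prems(1) NW by auto
      show ?thesis
      proof (cases C)
        case (NG g) then show ?thesis using dC0 by simp
      next
        case (NI z)
        have dz: "pdim P (rb P z) = i" using pdim_rb[of P z] less.prems(2) NI iv' by simp
        have "pceq P (Cmp i (rb P A) (Idt (rb P z))) (rb P A)"
          using R_unitr[OF o fb _ _ dz] p d NI by simp
        moreover have "mc P A C = A"
        proof -
          have p': "pcell P (Cmp i (rb P A) (Idt (rb P z)))" using p NI by simp
          have w: "wfe P (Cmp i (rb P A) (Idt (rb P z)))" using pcell_wfe[OF o p'] .
          then have c: "mbj P True i (eval P (rb P A)) = mbj P False i (NI (eval P (rb P z)))" by simp
          have cz: "csh P z" using less.prems(2) NI by simp
          have mz: "mdim P z = i" using dz pdim_rb[OF cz] by simp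
          have "z = mbj P True i A"
            using c eval_rb[OF o less.prems(1)] eval_rb[OF o cz] mz by (simp add: mbj_NI mbj_triv)
          moreover have "i < mdim P A" using gt iv' by simp
          ultimately have "mc P A (NI z) = A" using mz by (intro mc_right_unit[of i P A z True])
          then show ?thesis using NI by simp
        qed
        ultimately show ?thesis using NI by simp
      next
        case (NW b)
        define k where "k = mdim P C"
        define n where "n = mdim P A"
        have bne: "b \<noteq> []" using less.prems(2) NW by auto
        have wkw: "wok P n ws" using less.prems(1) \<open>A = NW ws\<close> n_def by auto
        have k1: "1 \<le> k" using dC0 k_def by simp
        have ij: "k - 1 < n - 1" using gt k_def n_def k1 by simp
        have rC: "rb P C = chain (k-1) (map rbw b)" using NW k_def by simp
        have rA: "rb P A = chain (n-1) (map rbw ws)" using \<open>A = NW ws\<close> n_def by simp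
        have hyp: "\<forall>w\<in>set ws. pcell P (Cmp (k-1) (rbw w) (chain (k-1) (map rbw b))) \<longrightarrow>
            pdim P (Cmp (k-1) (rbw w) (chain (k-1) (map rbw b))) \<le> N \<longrightarrow>
            pceq P (Cmp (k-1) (rbw w) (chain (k-1) (map rbw b))) (rbw (wr b k w))"
        proof (intro ballI impI)
          fix w assume w: "w \<in> set ws" and pw: "pcell P (Cmp (k-1) (rbw w) (chain (k-1) (map rbw b)))"
            and dw: "pdim P (Cmp (k-1) (rbw w) (chain (k-1) (map rbw b))) \<le> N"
          have "wsh P w" "Suc (lay w) = n" using wkw w by (auto simp: wok_def)
          then show "pceq P (Cmp (k-1) (rbw w) (chain (k-1) (map rbw b))) (rbw (wr b k w))"
            using K_rw[OF o fb bne k1] pw dw gt k_def n_def by simp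
        qed
        have e: "pceq P (Cmp (k-1) (chain (n-1) (map rbw ws)) (chain (k-1) (map rbw b)))
            (chain (n-1) (map (\<lambda>w. rbw (wr b k w)) ws))"
          using dist_chain_r[OF o fb ij wne hyp] p d rA rC iv' k_def by simp
        have "mc P A C = NW (map (wr b k) ws)" using \<open>A = NW ws\<close> NW gt k_def by (simp add: mc_NW_rw)
        moreover have "rb P (NW (map (wr b k) ws)) = chain (n-1) (map (\<lambda>w. rbw (wr b k w)) ws)"
          using \<open>A = NW ws\<close> n_def by (simp add: comp_def)
        ultimately show ?thesis using e rA rC iv' k_def by simp
      qed
    qed
  qed
qed




lemma Compl:
  assumes o: "omega_polygraph P" and fb: "FB P N"
  shows "pcell P x \<Longrightarrow> pdim P x \<le> N \<Longrightarrow> pceq P x (rb P (eval P x))"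
proof (induction x)
  case (Gen g)
  show ?case
  proof (cases "gdim P g = 0")
    case True then show ?thesis using Gen by (simp add: pcell_refl)
  next
    case False then show ?thesis using Gen by (simp add: pcell_refl rbw_wfull)
  qed
next
  case (Idt u)
  have "pcell P u" using pcell_IdtD[OF o Idt.prems(1)] .
  then have "pceq P u (rb P (eval P u))" using Idt by simp
  then show ?case by (simp add: pceq.idt)
next
  case (Cmp i a c)
  have pa: "pcell P a" "pcell P c" using pcell_CmpD[OF o Cmp.prems(1)] by auto
  have ea: "pceq P a (rb P (eval P a))" "pceq P c (rb P (eval P c))" using Cmp pa by auto
  have e1: "pceq P (Cmp i a c) (Cmp i (rb P (eval P a)) (rb P (eval P c)))"
    using R_cong[OF o fb Cmp.prems(1) Cmp.prems(2) ea(1) ea(2)] .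
  have p2: "pcell P (Cmp i (rb P (eval P a)) (rb P (eval P c)))" using pceq_refl2[OF e1] .
  have "pdim P (rb P (eval P a)) = pdim P a" "pdim P (rb P (eval P c)) = pdim P c"
    using pdim_rb[OF csh_eval] by auto
  then have d2: "pdim P (Cmp i (rb P (eval P a)) (rb P (eval P c))) \<le> N" using Cmp.prems(2) by simp
  have e2: "pceq P (Cmp i (rb P (eval P a)) (rb P (eval P c))) (rb P (mc P (eval P a) (eval P c)))"
    using K[OF o fb csh_eval csh_eval p2 d2] .
  show ?case using pceq.trans[OF e1 e2] by simp
qed

lemma FB_all:
  assumes o: "omega_polygraph P"
  shows "FB P N"
proof (induction N)
  case 0 then show ?case by (simp add: FB_def)
next
  case (Suc N)
  have "Faith P N"
    unfolding Faith_def
  proof (intro allI impI)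
    fix x y assume px: "pcell P x" and py: "pcell P y" and dx: "pdim P x \<le> N" and e: "eval P x = eval P y"
    have dy: "pdim P y \<le> N" using dx e mdim_eval by metis
    have "pceq P x (rb P (eval P x))" using Compl[OF o Suc.IH px dx] .
    moreover have "pceq P y (rb P (eval P y))" using Compl[OF o Suc.IH py dy] .
    ultimately show "pceq P x y" using e by (metis pceq.sym pceq.trans)
  qed
  then show ?case using Suc.IH by (auto simp: FB_def less_Suc_eq)
qed

lemma Faith_all:
  assumes o: "omega_polygraph P" and px: "pcell P x" and py: "pcell P y" and e: "eval P x = eval P y"
  shows "pceq P x y"
  using FB_all[OF o, of "Suc (pdim P x)"] px py e by (auto simp: FB_def Faith_def)

lemma wr_inj_arg: "wr b k w = wr b' k w \<Longrightarrow> 1 \<le> k \<Longrightarrow> k \<le> lay w \<Longrightarrow> b = b'"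
proof (induction w)
  case (WG g) then show ?case by simp
next
  case (WC L W R)
  show ?case
  proof (cases "Suc (lay W) = k")
    case True then show ?thesis using WC.prems by simp
  next
    case False
    then have "k < Suc (lay W)" using WC.prems by simp
    then show ?thesis using WC False by simp
  qed
qed

lemma mcancel:
  shows "csh P U \<Longrightarrow> csh P V1 \<Longrightarrow> csh P V2 \<Longrightarrow> 0 < mdim P U \<Longrightarrow> 0 < mdim P V1 \<Longrightarrow>
    mdim P V1 = mdim P V2 \<Longrightarrow> i = min (mdim P U) (mdim P V1) - 1 \<Longrightarrow>
    mbj P False i V1 = mbj P False i V2 \<Longrightarrow> mc P U V1 = mc P U V2 \<Longrightarrow> V1 = V2"
proof (induction "size U + size V1" arbitrary: U V1 V2 rule: less_induct)
  case less
  note cU = less.prems(1) and c1 = less.prems(2) and c2 = less.prems(3)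
  note dU = less.prems(4) and d1 = less.prems(5) and d12 = less.prems(6) and iv = less.prems(7)
  note sb = less.prems(8) and m = less.prems(9)
  consider (eq) "mdim P U = mdim P V1" | (lt) "mdim P U < mdim P V1" | (gt) "mdim P V1 < mdim P U" by linarith
  then show ?case
  proof cases
    case eq
    have cat: "cat U V1 = cat U V2" using m eq d12 by (simp add: mc_def)
    show ?thesis
    proof (cases U)
      case (NG g) then show ?thesis using dU by simp
    next
      case (NI x) then show ?thesis using cat by simp
    next
      case (NW a)
      show ?thesis
      proof (cases V1)
        case (NG g) then show ?thesis using d1 by simp
      next
        case (NI y1)
        show ?thesis
        proof (cases V2)
          case (NG g) then show ?thesis using d1 d12 by simp
        next
          case (NI y2)
          have "mbj P False i V1 = y1" using NI \<open>V1 = NI y1\<close> iv eq by (simp add: mbj_NI mbj_triv)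
          moreover have "mbj P False i V2 = y2" using NI \<open>V1 = NI y1\<close> iv eq d12 by (simp add: mbj_NI mbj_triv)
          ultimately show ?thesis using sb NI \<open>V1 = NI y1\<close> by simp
        next
          case (NW c2)
          have "c2 \<noteq> []" using c2 NW by simp
          then show ?thesis using cat \<open>U = NW a\<close> \<open>V1 = NI y1\<close> NW by simp
        qed
      next
        case (NW c1)
        have "c1 \<noteq> []" using c1 NW by simp
        show ?thesis
        proof (cases V2)
          case (NG g) then show ?thesis using d1 d12 by simp
        next
          case (NI y2)
          then show ?thesis using cat \<open>U = NW a\<close> NW \<open>c1 \<noteq> []\<close> by simp
        next
          case (NW c2)
          then show ?thesis using cat \<open>U = NW a\<close> \<open>V1 = NW c1\<close> by simp
        qed
      qed
    qed
  next
    case lt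
    have lw: "lw P U V1 = lw P U V2" using m lt d12 by (simp add: mc_def)
    show ?thesis
    proof (cases U)
      case (NG g) then show ?thesis using dU by simp
    next
      case (NI x) then show ?thesis using lw by simp
    next
      case (NW a)
      show ?thesis
      proof (cases V1)
        case (NG g) then show ?thesis using d1 by simp
      next
        case (NI y1)
        show ?thesis
        proof (cases V2)
          case (NG g) then show ?thesis using d1 d12 by simp
        next
          case (NI y2)
          have my: "mdim P U \<le> mdim P y1" "mdim P y1 = mdim P y2" using lt \<open>V1 = NI y1\<close> NI d12 by auto
          have e: "mc P U y1 = mc P U y2" using m \<open>V1 = NI y1\<close> NI my by (simp add: mc_NI_right_lw)
          have iy: "i \<le> mdim P y1" using iv my lt by simp
          have sb': "mbj P False i y1 = mbj P False i y2" using sb \<open>V1 = NI y1\<close> NI iy my by (simp add: mbj_NI)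
          have "y1 = y2"
            using less.hyps[of U y1 y2] \<open>V1 = NI y1\<close> cU c1 c2 NI dU my iv lt sb' e by simp
          then show ?thesis using NI \<open>V1 = NI y1\<close> by simp
        next
          case (NW c2) then show ?thesis using lw \<open>V1 = NI y1\<close> by simp
        qed
      next
        case (NW ws1)
        show ?thesis
        proof (cases V2)
          case (NG g) then show ?thesis using d1 d12 by simp
        next
          case (NI y2) then show ?thesis using lw \<open>V1 = NW ws1\<close> by simp
        next
          case (NW ws2)
          have "map (wl a (mdim P U)) ws1 = map (wl a (mdim P U)) ws2"
            using lw \<open>V1 = NW ws1\<close> NW \<open>U = NW a\<close> by simp
          then have "ws1 = ws2" by (rule map_inj_IH[rotated]) (use wl_inj in blast)
          then show ?thesis using NW \<open>V1 = NW ws1\<close> by simp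
        qed
      qed
    qed
  next
    case gt
    have rw: "rw P U V1 = rw P U V2" using m gt d12 by (simp add: mc_def)
    show ?thesis
    proof (cases U)
      case (NG g) then show ?thesis using dU by simp
    next
      case (NI x)
      have mx: "mdim P V1 \<le> mdim P x" using gt NI by simp
      have e: "mc P x V1 = mc P x V2" using m NI mx d12 by (simp add: mc_NI_left_rw)
      show ?thesis
      proof (cases "mdim P x = 0")
        case True then show ?thesis using mx d1 by simp
      next
        case False
        show ?thesis
          using less.hyps[of x V1 V2] NI cU c1 c2 False d1 d12 iv gt e sb mx by (simp add: min_def)
      qed
    next
      case (NW ws)
      have wne: "ws \<noteq> []" and wk: "wok P (mdim P U) ws" using cU NW by auto
      obtain w ws' where wsd: "ws = w # ws'" using wne by (cases ws) auto
      have ww: "Suc (lay w) = mdim P U" using wk wsd by (auto simp: wok_def)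
      have "wr (cl V1) (mdim P V1) w = wr (cl V2) (mdim P V1) w" using rw NW wsd d12 by simp
      moreover have "1 \<le> mdim P V1" "mdim P V1 \<le> lay w" using d1 ww gt by auto
      ultimately have clq: "cl V1 = cl V2" by (rule wr_inj_arg)
      show ?thesis
      proof (cases V1)
        case (NG g) then show ?thesis using d1 by simp
      next
        case (NI z1)
        show ?thesis
        proof (cases V2)
          case (NG g) then show ?thesis using d1 d12 by simp
        next
          case (NI z2)
          have "mbj P False i V1 = z1" using \<open>V1 = NI z1\<close> iv gt by (simp add: mbj_NI mbj_triv)
          moreover have "mbj P False i V2 = z2" using NI \<open>V1 = NI z1\<close> iv gt d12 by (simp add: mbj_NI mbj_triv)
          ultimately show ?thesis using sb NI \<open>V1 = NI z1\<close> by simp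
        next
          case (NW c2)
          have "c2 \<noteq> []" using c2 NW by simp
          then show ?thesis using clq NW \<open>V1 = NI z1\<close> by simp
        qed
      next
        case (NW c1)
        have "c1 \<noteq> []" using c1 NW by simp
        show ?thesis
        proof (cases V2)
          case (NG g) then show ?thesis using d1 d12 by simp
        next
          case (NI z2) then show ?thesis using clq \<open>V1 = NW c1\<close> \<open>c1 \<noteq> []\<close> by simp
        next
          case (NW c2) then show ?thesis using clq \<open>V1 = NW c1\<close> by simp
        qed
      qed
    qed
  qed
qed

theorem proposition2p4:
  fixes P :: "('g, 'x) polygraph_scheme"
  assumes "omega_polygraph P"
    and "pcell P u" and "pcell P v1" and "pcell P v2"
    and "pcell P (Cmp i u v1)" and "pcell P (Cmp i u v2)"
    and "pceq P (Cmp i u v1) (Cmp i u v2)"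
  shows "pceq P v1 v2"
proof -
  note o = assms(1)
  have w1: "wfe P (Cmp i u v1)" using pcell_wfe[OF o assms(5)] .
  have w2: "wfe P (Cmp i u v2)" using pcell_wfe[OF o assms(6)] .
  have e: "mc P (eval P u) (eval P v1) = mc P (eval P u) (eval P v2)" using Sound_all(1)[OF o assms(7)] by simp
  have wd1: "wfd P i u v1" and wd2: "wfd P i u v2" using w1 w2 by auto
  have c1: "mbj P True i (eval P u) = mbj P False i (eval P v1)" using w1 by simp
  have c2: "mbj P True i (eval P u) = mbj P False i (eval P v2)" using w2 by simp
  have mx: "max (pdim P u) (pdim P v1) = max (pdim P u) (pdim P v2)"
    using arg_cong[OF e, of "mdim P"] by simp
  have mn: "min (pdim P u) (pdim P v1) = min (pdim P u) (pdim P v2)"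
    using wd1 wd2 by (auto simp: wfd_def)
  have dv: "pdim P v1 = pdim P v2" using mx mn by (simp add: min_def max_def split: if_splits)
  have "eval P v1 = eval P v2"
    using mcancel[OF csh_eval csh_eval csh_eval, of P u v1 v2 i] wd1 dv c1 c2 e by (simp add: wfd_def)
  then show ?thesis using Faith_all[OF o assms(3,4)] by simp
qed


end
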